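(* Fix $\upsilon \in (0,1]$. Then the limit $\lim_{p\to\infty,\ p \text{ prime}} \rho(\upsilon,p)$ exists.
   Context: For an integer $N\ge 2$ and $f:\mathbb{Z}_N\to\mathbb{C}$ (where $\mathbb{Z}_N=\mathbb{Z}/N\mathbb{Z}$), define $\mathbb{E}(f)=\frac1N\sum_{n\in\mathbb{Z}_N} f(n)$ and $\Lambda_3(f)=\Lambda_3(f;N)=\frac{1}{N^2}\sum_{n,d\in\mathbb{Z}_N} f(n)f(n+d)f(n+2d)$. For $\upsilon\in(0,1]$ let $\mathcal{F}(\upsilon)=\mathcal{F}_N(\upsilon)$ be the family of all functions $f:\mathbb{Z}_N\to[0,1]$ with $\mathbb{E}(f)\ge \upsilon$, and define $\rho(\upsilon,N)=\min_{f\in\mathcal{F}_N(\upsilon)}\Lambda_3(f)$. *)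

theory Defs
  imports "HOL-Analysis.Analysis" "HOL-Computational_Algebra.Primes"
begin

text \<open>Functions on Z_N are represented as functions nat => real, where only the
values on {0..<N} matter; addition in Z_N is addition mod N.\<close>

definition expect :: "nat \<Rightarrow> (nat \<Rightarrow> real) \<Rightarrow> real" where
  "expect N f = (\<Sum>n<N. f n) / real N"

definition Lambda3 :: "nat \<Rightarrow> (nat \<Rightarrow> real) \<Rightarrow> real" where
  "Lambda3 N f = (\<Sum>n<N. \<Sum>d<N. f n * f ((n + d) mod N) * f ((n + 2 * d) mod N)) / (real N)^2"

definition family :: "nat \<Rightarrow> real \<Rightarrow> (nat \<Rightarrow> real) set" where
  "family N v = {f. (\<forall>n<N. 0 \<le> f n \<and> f n \<le> 1) \<and> expect N f \<ge> v}"

text \<open>The minimum (attained by compactness) is written as an infimum.\<close>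
definition rho :: "real \<Rightarrow> nat \<Rightarrow> real" where
  "rho v N = Inf (Lambda3 N ` family N v)"

end

theory Submission
  imports Defs
begin

lemma norm_cis_minus_1: "norm (cis x - 1) \<le> \<bar>x\<bar>"
proof -
  have "(norm (cis x - 1))^2 = (cos x - 1)^2 + (sin x)^2"
    by (simp add: cmod_def)
  also have "\<dots> = 2 - 2 * cos x" using sin_cos_squared_add[of x] by (simp add: power2_eq_square algebra_simps)
  also have "\<dots> = 4 * (sin (x/2))^2" using cos_double_sin[of "x/2"] by simp
  also have "\<dots> \<le> x^2"
  proof -
    have "\<bar>sin (x/2)\<bar> \<le> \<bar>x/2\<bar>" by (rule abs_sin_x_le_abs_x)
    hence "(sin (x/2))^2 \<le> (x/2)^2" by (metis abs_le_square_iff)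
    thus ?thesis by (simp add: power2_eq_square)
  qed
  finally show ?thesis by (metis abs_le_square_iff abs_norm_cancel)
qed

definition ee :: "nat \<Rightarrow> int \<Rightarrow> complex" where
  "ee N k = cis (2 * pi * real_of_int k / real N)"

lemma ee_add: "ee N (a + b) = ee N a * ee N b"
  by (simp add: ee_def cis_mult add_divide_distrib ring_distribs)

lemma ee_dvd: assumes "N > 0" "int N dvd k" shows "ee N k = 1"
proof -
  obtain t where "k = int N * t" using assms by (auto elim: dvdE)
  hence "2 * pi * real_of_int k / real N = 2 * pi * real_of_int t" using assms by simp
  thus ?thesis by (simp add: ee_def)
qed

lemma ee_cong: assumes "N > 0" "a mod int N = b mod int N" shows "ee N a = ee N b"
proof -
  have "int N dvd (a - b)" using assms by (simp add: mod_eq_dvd_iff)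
  hence "ee N (a - b) = 1" using ee_dvd assms by blast
  hence "ee N ((a - b) + b) = ee N b" by (simp only: ee_add) simp
  thus ?thesis by simp
qed

lemma ee_neq1: assumes "N > 0" "\<not> int N dvd k" shows "ee N k \<noteq> 1"
proof
  assume "ee N k = 1"
  hence "exp (\<i> * complex_of_real (2 * pi * real_of_int k / real N)) = 1" by (simp add: ee_def cis_conv_exp)
  then obtain n :: int where n: "2 * pi * real_of_int k / real N = of_int (2*n) * pi"
    by (auto simp: exp_eq_1)
  hence "real_of_int k = real N * of_int n" using assms(1) by (simp add: field_simps)
  hence "k = int N * n" by (metis of_int_eq_iff of_int_mult of_int_of_nat_eq)
  thus False using assms(2) by simp
qed

lemma ee_norm [simp]: "norm (ee N k) = 1" by (simp add: ee_def)

lemma ee_mult_nat: "ee N (k * int n) = ee N k ^ n"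
proof -
  have "ee N k ^ n = cis (real n * (2 * pi * real_of_int k / real N))"
    unfolding ee_def by (rule Complex.DeMoivre)
  thus ?thesis unfolding ee_def by (simp add: field_simps)
qed

lemma ee_orth: assumes "N > 0"
  shows "(\<Sum>n<N. ee N (k * int n)) = (if int N dvd k then of_nat N else 0)"
proof (cases "int N dvd k")
  case True
  have "ee N (k * int n) = 1" for n using ee_dvd[OF assms] True by simp
  thus ?thesis using True by simp
next
  case False
  let ?z = "ee N k"
  have z1: "?z \<noteq> 1" using ee_neq1 assms False by blast
  have zN: "?z ^ N = 1" using ee_dvd[OF assms, of "k * int N"] ee_mult_nat[of N k N] by simp
  have "(\<Sum>n<N. ?z ^ n) = (?z ^ N - 1) / (?z - 1)" using z1 by (simp add: geometric_sum)
  thus ?thesis using zN False by (simp add: ee_mult_nat)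
qed

lemma nat_mod_eq_int: "((a::nat) mod N = b mod N) \<longleftrightarrow> int N dvd int a - int b"
  by (metis mod_eq_dvd_iff of_nat_eq_iff zmod_int)

lemma dvd_diff_less: assumes "a < N" "b < N" shows "int N dvd int b - int a \<longleftrightarrow> b = a"
  using nat_mod_eq_int[of b N a] assms by simp

lemma bij_mod:
  fixes N :: nat
  assumes "N > 0" "\<And>x y. x < N \<Longrightarrow> y < N \<Longrightarrow> h x mod N = h y mod N \<Longrightarrow> x = y"
  shows "bij_betw (\<lambda>m. h m mod N) {..<N} {..<N}"
proof -
  have inj: "inj_on (\<lambda>m. h m mod N) {..<N}" unfolding inj_on_def using assms(2) by blast
  have sub: "(\<lambda>m. h m mod N) ` {..<N} \<subseteq> {..<N}" using assms(1) by (auto intro: mod_less_divisor)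
  have fin: "finite {..<N}" by simp
  have "(\<lambda>m. h m mod N) ` {..<N} = {..<N}" by (rule endo_inj_surj[OF fin sub inj])
  thus ?thesis using inj by (simp add: bij_betw_def)
qed

lemma bij_shift: "(N::nat) > 0 \<Longrightarrow> bij_betw (\<lambda>m. (m + s) mod N) {..<N} {..<N}"
proof (rule bij_mod)
  fix x y assume xy: "x < N" "y < N" "(x + s) mod N = (y + s) mod N"
  hence "int N dvd int (x + s) - int (y + s)" by (simp only: nat_mod_eq_int)
  hence "int N dvd int x - int y" by simp
  thus "x = y" using xy dvd_diff_less by (metis dvd_diff_commute)
qed

lemma bij_dil: fixes N c :: nat assumes "N > 0" "coprime c N" shows "bij_betw (\<lambda>m. (c * m) mod N) {..<N} {..<N}"
proof (rule bij_mod[OF assms(1)])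
  fix x y assume xy: "x < N" "y < N" "c * x mod N = c * y mod N"
  hence "int N dvd int c * (int x - int y)" by (simp add: nat_mod_eq_int right_diff_distrib)
  moreover have "coprime (int N) (int c)" using assms(2) by (simp add: coprime_commute)
  ultimately have "int N dvd int x - int y" by (simp add: coprime_dvd_mult_right_iff)
  thus "x = y" using xy dvd_diff_less by (metis dvd_diff_commute)
qed

lemma beta_eq: assumes "N > 0"
  shows "nat ((2 * int ((n + d) mod N) - int n) mod int N) = (n + 2*d) mod N"
proof -
  have 1: "int N dvd int ((n + d) mod N) - int (n + d)"
    using nat_mod_eq_int[of "(n+d) mod N" N "n+d"] by simp
  have "int N dvd (2 * int ((n + d) mod N) - int n) - int (n + 2 * d)"
    using dvd_mult[OF 1, of 2] by (simp add: algebra_simps)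
  hence "(2 * int ((n + d) mod N) - int n) mod int N = int (n + 2 * d) mod int N"
    by (simp add: mod_eq_dvd_iff)
  also have "\<dots> = int ((n + 2 * d) mod N)" by (rule zmod_int[symmetric])
  finally have "nat ((2 * int ((n + d) mod N) - int n) mod int N) = nat (int ((n + 2 * d) mod N))"
    by (rule arg_cong)
  thus ?thesis by (simp only: nat_int)
qed

lemma sum_swap3: "(\<Sum>r\<in>C. \<Sum>a\<in>A. \<Sum>b\<in>B. F r a b) = (\<Sum>a\<in>A. \<Sum>b\<in>B. \<Sum>r\<in>C. F r a b)"
proof -
  have "(\<Sum>r\<in>C. \<Sum>a\<in>A. \<Sum>b\<in>B. F r a b) = (\<Sum>a\<in>A. \<Sum>r\<in>C. \<Sum>b\<in>B. F r a b)" by (rule sum.swap)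
  also have "\<dots> = (\<Sum>a\<in>A. \<Sum>b\<in>B. \<Sum>r\<in>C. F r a b)" by (rule sum.cong[OF refl], rule sum.swap)
  finally show ?thesis .
qed

lemma sum_swap4: "(\<Sum>r\<in>D. \<Sum>a\<in>A. \<Sum>b\<in>B. \<Sum>c\<in>C. F r a b c) = (\<Sum>a\<in>A. \<Sum>b\<in>B. \<Sum>c\<in>C. \<Sum>r\<in>D. F r a b c)"
proof -
  have "(\<Sum>r\<in>D. \<Sum>a\<in>A. \<Sum>b\<in>B. \<Sum>c\<in>C. F r a b c) = (\<Sum>a\<in>A. \<Sum>r\<in>D. \<Sum>b\<in>B. \<Sum>c\<in>C. F r a b c)" by (rule sum.swap)
  also have "\<dots> = (\<Sum>a\<in>A. \<Sum>b\<in>B. \<Sum>c\<in>C. \<Sum>r\<in>D. F r a b c)" by (rule sum.cong[OF refl], rule sum_swap3)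
  finally show ?thesis .
qed

definition fh :: "nat \<Rightarrow> (nat \<Rightarrow> real) \<Rightarrow> int \<Rightarrow> complex" where
  "fh N f r = (\<Sum>n<N. of_real (f n) * ee N (- r * int n)) / of_nat N"

lemma cnj_ee: "cnj (ee N k) = ee N (-k)"
  by (simp add: ee_def cis_cnj)

lemma fh_norm_sq:
  "complex_of_real ((cmod (fh N f s))^2) =
     (\<Sum>a<N. \<Sum>b<N. of_real (f a * f b) * ee N ((int b - int a) * s)) / (of_nat N)^2"
proof -
  have c: "cnj (fh N f s) = (\<Sum>b<N. of_real (f b) * ee N (s * int b)) / of_nat N"
  proof -
    have "cnj (of_real (f b) * ee N (- s * int b)) = of_real (f b) * ee N (s * int b)" for b
      by (simp add: cnj_ee)
    hence "cnj (\<Sum>b<N. of_real (f b) * ee N (- s * int b)) = (\<Sum>b<N. of_real (f b) * ee N (s * int b))"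
      unfolding cnj_sum by (rule sum.cong[OF refl])
    thus ?thesis unfolding fh_def by simp
  qed
  have "complex_of_real ((cmod (fh N f s))^2) = fh N f s * cnj (fh N f s)"
    by (rule complex_norm_square)
  also have "\<dots> = ((\<Sum>a<N. of_real (f a) * ee N (- s * int a)) * (\<Sum>b<N. of_real (f b) * ee N (s * int b))) / (of_nat N)^2"
    unfolding c unfolding fh_def by (simp add: power2_eq_square)
  also have "\<dots> = (\<Sum>a<N. \<Sum>b<N. (of_real (f a) * ee N (- s * int a)) * (of_real (f b) * ee N (s * int b))) / (of_nat N)^2"
    by (simp add: sum_product)
  also have "\<dots> = (\<Sum>a<N. \<Sum>b<N. of_real (f a * f b) * ee N ((int b - int a) * s)) / (of_nat N)^2"
  proof -
    have "(of_real (f a) * ee N (- s * int a)) * (of_real (f b) * ee N (s * int b)) =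
          of_real (f a * f b) * ee N ((int b - int a) * s)" (is "?X a b = ?Y a b") for a b
    proof -
      have "ee N ((int b - int a) * s) = ee N (- s * int a + s * int b)" by (simp add: algebra_simps)
      also have "\<dots> = ee N (- s * int a) * ee N (s * int b)" by (rule ee_add)
      finally show ?thesis by simp
    qed
    thus ?thesis by (simp only:)
  qed
  finally show ?thesis .
qed

lemma parseval:
  assumes N: "N > 0" and cop: "coprime t (int N)"
  shows "(\<Sum>r<N. (cmod (fh N f (t * int r)))^2) = (\<Sum>a<N. (f a)^2) / real N"
proof -
  have "complex_of_real (\<Sum>r<N. (cmod (fh N f (t * int r)))^2) =
     (\<Sum>r<N. (\<Sum>a<N. \<Sum>b<N. of_real (f a * f b) * ee N ((int b - int a) * (t * int r))) / (of_nat N)^2)"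
    by (simp only: of_real_sum fh_norm_sq)
  also have "\<dots> = (\<Sum>r<N. \<Sum>a<N. \<Sum>b<N. of_real (f a * f b) * ee N ((int b - int a) * (t * int r))) / (of_nat N)^2"
    by (rule sum_divide_distrib[symmetric])
  also have "\<dots> = (\<Sum>a<N. \<Sum>b<N. \<Sum>r<N. of_real (f a * f b) * ee N ((int b - int a) * (t * int r))) / (of_nat N)^2"
    by (subst sum_swap3) (rule refl)
  also have "\<dots> = (\<Sum>a<N. \<Sum>b<N. of_real (f a * f b) * (\<Sum>r<N. ee N (((int b - int a) * t) * int r))) / (of_nat N)^2"
    by (simp only: sum_distrib_left mult.assoc)
  also have "\<dots> = (\<Sum>a<N. \<Sum>b<N. of_real (f a * f b) * (if b = a then of_nat N else 0)) / (of_nat N)^2"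
  proof -
    have "int N dvd (int b - int a) * t \<longleftrightarrow> b = a" if "a < N" "b < N" for a b
    proof -
      have "coprime (int N) t" using cop by (simp add: coprime_commute)
      hence "int N dvd (int b - int a) * t \<longleftrightarrow> int N dvd (int b - int a)"
        by (simp add: coprime_dvd_mult_left_iff)
      thus ?thesis using dvd_diff_less that by blast
    qed
    thus ?thesis by (simp add: ee_orth[OF N])
  qed
  also have "\<dots> = (\<Sum>a<N. of_real ((f a)^2) * of_nat N) / (of_nat N)^2"
    by (simp add: power2_eq_square if_distrib sum.delta cong: if_cong)
  also have "\<dots> = complex_of_real ((\<Sum>a<N. (f a)^2) / real N)"
    using N by (simp add: sum_distrib_right[symmetric] power2_eq_square)
  finally show ?thesis by (simp only: of_real_eq_iff)
qed

definition beta :: "nat \<Rightarrow> nat \<Rightarrow> nat \<Rightarrow> nat" where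
  "beta N a c = nat ((2 * int c - int a) mod int N)"

lemma beta_iff: assumes N: "N > 0" and b: "b < N"
  shows "int N dvd (2 * int c - int a - int b) \<longleftrightarrow> b = beta N a c"
proof -
  have nn: "int (beta N a c) = (2 * int c - int a) mod int N" using N by (simp add: beta_def)
  have "int N dvd (2 * int c - int a - int b) \<longleftrightarrow> (2 * int c - int a) mod int N = int b mod int N"
    by (simp add: mod_eq_dvd_iff)
  also have "int b mod int N = int b" using b by simp
  also have "(2 * int c - int a) mod int N = int b \<longleftrightarrow> b = beta N a c" using nn by auto
  finally show ?thesis .
qed

lemma lambda_real: assumes N: "N > 0"
  shows "Lambda3 N f = (\<Sum>a<N. \<Sum>c<N. f a * f c * f (beta N a c)) / (real N)^2"
proof -
  have "(\<Sum>d<N. f ((n + d) mod N) * f ((n + 2 * d) mod N)) = (\<Sum>c<N. f c * f (beta N n c))" for n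
  proof -
    have "(\<Sum>c<N. f c * f (beta N n c)) = (\<Sum>d<N. f ((d + n) mod N) * f (beta N n ((d + n) mod N)))"
      by (rule sum.reindex_bij_betw[symmetric, OF bij_shift[OF N]])
    also have "\<dots> = (\<Sum>d<N. f ((n + d) mod N) * f ((n + 2 * d) mod N))"
    proof (rule sum.cong[OF refl])
      fix d
      have "beta N n ((d + n) mod N) = (n + 2 * d) mod N"
        using beta_eq[OF N, of n d] by (simp add: beta_def add.commute)
      thus "f ((d + n) mod N) * f (beta N n ((d + n) mod N)) = f ((n + d) mod N) * f ((n + 2 * d) mod N)"
        by (simp add: add.commute)
    qed
    finally show ?thesis by simp
  qed
  note inner = this
  have "(\<Sum>n<N. \<Sum>d<N. f n * f ((n + d) mod N) * f ((n + 2 * d) mod N)) = (\<Sum>a<N. \<Sum>c<N. f a * f c * f (beta N a c))"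
  proof (rule sum.cong[OF refl])
    fix n
    have "(\<Sum>d<N. f n * f ((n + d) mod N) * f ((n + 2 * d) mod N)) = f n * (\<Sum>d<N. f ((n + d) mod N) * f ((n + 2 * d) mod N))"
      by (simp add: sum_distrib_left mult.assoc)
    also have "\<dots> = f n * (\<Sum>c<N. f c * f (beta N n c))" by (simp only: inner)
    also have "\<dots> = (\<Sum>c<N. f n * f c * f (beta N n c))" by (simp add: sum_distrib_left mult.assoc)
    finally show "(\<Sum>d<N. f n * f ((n + d) mod N) * f ((n + 2 * d) mod N)) = (\<Sum>c<N. f n * f c * f (beta N n c))" .
  qed
  thus ?thesis by (simp add: Lambda3_def)
qed

lemma triple_product:
  fixes f g h :: "nat \<Rightarrow> complex"
  shows "sum f A * sum g B * sum h C = (\<Sum>a\<in>A. \<Sum>b\<in>B. \<Sum>c\<in>C. f a * g b * h c)"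
proof -
  have "sum f A * sum g B * sum h C = (\<Sum>a\<in>A. \<Sum>b\<in>B. f a * g b) * sum h C"
    by (simp only: sum_product)
  also have "\<dots> = (\<Sum>a\<in>A. (\<Sum>b\<in>B. f a * g b) * sum h C)" by (rule sum_distrib_right)
  also have "\<dots> = (\<Sum>a\<in>A. \<Sum>b\<in>B. f a * g b * sum h C)" by (rule sum.cong[OF refl], rule sum_distrib_right)
  also have "\<dots> = (\<Sum>a\<in>A. \<Sum>b\<in>B. \<Sum>c\<in>C. f a * g b * h c)"
    by (rule sum.cong[OF refl], rule sum.cong[OF refl], rule sum_distrib_left)
  finally show ?thesis .
qed

lemma lambda_fourier: assumes N: "N > 0"
  shows "complex_of_real (Lambda3 N f) = (\<Sum>r<N. (fh N f (int r))^2 * fh N f (-2 * int r))"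
proof -
  define X where "X a b c = complex_of_real (f a * f b * f c)" for a b c
  have tm: "(fh N f (int r))^2 * fh N f (-2 * int r) =
     (\<Sum>a<N. \<Sum>b<N. \<Sum>c<N. X a b c * ee N ((2 * int c - int a - int b) * int r)) / (of_nat N)^3" for r
  proof -
    have "(fh N f (int r))^2 * fh N f (-2 * int r) =
      ((\<Sum>a<N. of_real (f a) * ee N (- int r * int a)) * (\<Sum>b<N. of_real (f b) * ee N (- int r * int b))
       * (\<Sum>c<N. of_real (f c) * ee N (- (-2 * int r) * int c))) / (of_nat N)^3"
      unfolding fh_def by (simp add: power2_eq_square power3_eq_cube)
    also have "\<dots> = (\<Sum>a<N. \<Sum>b<N. \<Sum>c<N. (of_real (f a) * ee N (- int r * int a)) * (of_real (f b) * ee N (- int r * int b))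
       * (of_real (f c) * ee N (- (-2 * int r) * int c))) / (of_nat N)^3"
      by (simp only: triple_product)
    also have "\<dots> = (\<Sum>a<N. \<Sum>b<N. \<Sum>c<N. X a b c * ee N ((2 * int c - int a - int b) * int r)) / (of_nat N)^3"
    proof -
      have "(of_real (f a) * ee N (- int r * int a)) * (of_real (f b) * ee N (- int r * int b))
       * (of_real (f c) * ee N (- (-2 * int r) * int c)) = X a b c * ee N ((2 * int c - int a - int b) * int r)" for a b c
      proof -
        have "ee N ((2 * int c - int a - int b) * int r) = ee N (- int r * int a + (- int r * int b) + (- (-2 * int r) * int c))"
          by (simp add: algebra_simps)
        also have "\<dots> = ee N (- int r * int a) * ee N (- int r * int b) * ee N (- (-2 * int r) * int c)"
          by (simp only: ee_add)
        finally show ?thesis by (simp add: X_def)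
      qed
      thus ?thesis by (simp only:)
    qed
    finally show ?thesis .
  qed
  have "(\<Sum>r<N. (fh N f (int r))^2 * fh N f (-2 * int r)) =
     (\<Sum>r<N. \<Sum>a<N. \<Sum>b<N. \<Sum>c<N. X a b c * ee N ((2 * int c - int a - int b) * int r)) / (of_nat N)^3"
    by (simp only: tm sum_divide_distrib[symmetric])
  also have "\<dots> = (\<Sum>a<N. \<Sum>b<N. \<Sum>c<N. \<Sum>r<N. X a b c * ee N ((2 * int c - int a - int b) * int r)) / (of_nat N)^3"
    by (subst sum_swap4) (rule refl)
  also have "\<dots> = (\<Sum>a<N. \<Sum>b<N. \<Sum>c<N. X a b c * (if int N dvd (2 * int c - int a - int b) then of_nat N else 0)) / (of_nat N)^3"
    by (simp only: sum_distrib_left[symmetric] ee_orth[OF N])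
  also have "\<dots> = (\<Sum>a<N. \<Sum>c<N. \<Sum>b<N. X a b c * (if int N dvd (2 * int c - int a - int b) then of_nat N else 0)) / (of_nat N)^3"
    by (subst (2) sum.swap) (rule refl)
  also have "\<dots> = (\<Sum>a<N. \<Sum>c<N. X a (beta N a c) c * of_nat N) / (of_nat N)^3"
  proof -
    have "(\<Sum>b<N. X a b c * (if int N dvd (2 * int c - int a - int b) then of_nat N else 0)) = X a (beta N a c) c * of_nat N" for a c
    proof -
      have "(\<Sum>b<N. X a b c * (if int N dvd (2 * int c - int a - int b) then of_nat N else 0)) =
            (\<Sum>b<N. if b = beta N a c then X a b c * of_nat N else 0)"
        by (rule sum.cong[OF refl]) (simp add: beta_iff[OF N])
      also have "\<dots> = X a (beta N a c) c * of_nat N"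
        using N by (simp add: sum.delta beta_def nat_less_iff)
      finally show ?thesis .
    qed
    thus ?thesis by (simp only:)
  qed
  also have "\<dots> = (\<Sum>a<N. \<Sum>c<N. X a (beta N a c) c) / (of_nat N)^2"
    using N by (simp add: sum_distrib_right[symmetric] power2_eq_square power3_eq_cube)
  also have "\<dots> = complex_of_real (Lambda3 N f)"
    unfolding lambda_real[OF N] X_def by (simp add: mult_ac)
  finally show ?thesis by simp
qed

lemma modd: "int N dvd int (x mod N) - int x"
  using nat_mod_eq_int[of "x mod N" N x] by simp

lemma nat_mod_eqI: "int N dvd int a - int b \<Longrightarrow> a mod N = b mod N"
  by (simp add: nat_mod_eq_int)

definition dil :: "nat \<Rightarrow> nat \<Rightarrow> (nat \<Rightarrow> real) \<Rightarrow> nat \<Rightarrow> real" where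
  "dil N c f n = f ((c * n) mod N)"

lemma beta_less: "N > 0 \<Longrightarrow> beta N a c < N"
  unfolding beta_def by (simp add: nat_less_iff)

lemma beta_dil: assumes N: "N > 0"
  shows "(c * beta N a b) mod N = beta N ((c * a) mod N) ((c * b) mod N)"
proof -
  let ?y = "(c * beta N a b) mod N"
  have y: "?y < N" using N by simp
  have d1: "int N dvd 2 * int b - int a - int (beta N a b)"
    using beta_iff[OF N beta_less[OF N]] by simp
  have "int N dvd int c * (2 * int b - int a - int (beta N a b))" using d1 by simp
  moreover have "int N dvd 2 * (int ((c * b) mod N) - int (c * b))" by (rule dvd_mult, rule modd)
  moreover have "int N dvd (int ((c * a) mod N) - int (c * a))" by (rule modd)
  moreover have "int N dvd (int ?y - int (c * beta N a b))" by (rule modd)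
  ultimately have "int N dvd int c * (2 * int b - int a - int (beta N a b))
      + 2 * (int ((c * b) mod N) - int (c * b)) - (int ((c * a) mod N) - int (c * a)) - (int ?y - int (c * beta N a b))"
    by (simp add: dvd_add dvd_diff)
  hence "int N dvd 2 * int ((c * b) mod N) - int ((c * a) mod N) - int ?y"
    by (simp add: algebra_simps)
  thus ?thesis using beta_iff[OF N y] by simp
qed

lemma Lambda3_dil: assumes N: "N > 0" and cop: "coprime c N"
  shows "Lambda3 N (dil N c f) = Lambda3 N f"
proof -
  have "(\<Sum>a<N. \<Sum>b<N. dil N c f a * dil N c f b * dil N c f (beta N a b)) =
        (\<Sum>a<N. \<Sum>b<N. f ((c * a) mod N) * f ((c * b) mod N) * f (beta N ((c * a) mod N) ((c * b) mod N)))"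
    by (simp add: dil_def beta_dil[OF N])
  also have "\<dots> = (\<Sum>a<N. \<Sum>b<N. f a * f ((c * b) mod N) * f (beta N a ((c * b) mod N)))"
    by (rule sum.reindex_bij_betw[OF bij_dil[OF N cop], where g = "\<lambda>a. \<Sum>b<N. f a * f ((c * b) mod N) * f (beta N a ((c * b) mod N))"])
  also have "\<dots> = (\<Sum>a<N. \<Sum>b<N. f a * f b * f (beta N a b))"
    by (rule sum.cong[OF refl], rule sum.reindex_bij_betw[OF bij_dil[OF N cop]])
  finally show ?thesis by (simp add: lambda_real[OF N])
qed

lemma sum_dil: fixes N c :: nat and f :: "nat \<Rightarrow> 'a::comm_monoid_add" assumes N: "N > 0" and cop: "coprime c N"
  shows "(\<Sum>n<N. f ((c * n) mod N)) = (\<Sum>n<N. f n)"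
  by (rule sum.reindex_bij_betw[OF bij_dil[OF N cop]])

definition sm :: "nat \<Rightarrow> nat \<Rightarrow> nat \<Rightarrow> (nat \<Rightarrow> real) \<Rightarrow> nat \<Rightarrow> real" where
  "sm N c L f m = (\<Sum>j<L. f ((m + c * j) mod N)) / real L"

definition nu :: "nat \<Rightarrow> nat \<Rightarrow> nat \<Rightarrow> int \<Rightarrow> complex" where
  "nu N c L r = (\<Sum>j<L. ee N (r * int (c * j))) / of_nat L"

lemma shift_sum: assumes N: "N > 0"
  shows "(\<Sum>m<N. of_real (f ((m + s) mod N)) * ee N (- r * int m)) =
         (\<Sum>m<N. of_real (f m) * ee N (- r * int m)) * ee N (r * int s)"
proof -
  have "(\<Sum>m<N. of_real (f m) * ee N (- r * int m)) * ee N (r * int s) =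
        (\<Sum>m<N. of_real (f m) * ee N (- r * int m) * ee N (r * int s))"
    by (simp add: sum_distrib_right)
  also have "\<dots> = (\<Sum>m<N. of_real (f ((m + s) mod N)) * ee N (- r * int ((m + s) mod N)) * ee N (r * int s))"
    by (rule sum.reindex_bij_betw[symmetric, OF bij_shift[OF N]])
  also have "\<dots> = (\<Sum>m<N. of_real (f ((m + s) mod N)) * ee N (- r * int m))"
  proof (rule sum.cong[OF refl])
    fix m
    have "ee N (- r * int ((m + s) mod N)) * ee N (r * int s) = ee N (- r * int ((m + s) mod N) + r * int s)"
      by (rule ee_add[symmetric])
    also have "\<dots> = ee N (- r * int m)"
    proof (rule ee_cong[OF N])
      have "int N dvd int ((m + s) mod N) - int (m + s)" by (rule modd)
      hence "int N dvd (- r) * (int ((m + s) mod N) - int (m + s))" by simp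
      hence "int N dvd (- r * int ((m + s) mod N) + r * int s) - (- r * int m)"
        by (simp add: algebra_simps)
      thus "(- r * int ((m + s) mod N) + r * int s) mod int N = (- r * int m) mod int N"
        by (simp add: mod_eq_dvd_iff)
    qed
    finally show "of_real (f ((m + s) mod N)) * ee N (- r * int ((m + s) mod N)) * ee N (r * int s) =
        of_real (f ((m + s) mod N)) * ee N (- r * int m)" by (simp add: mult.assoc)
  qed
  finally show ?thesis by simp
qed

lemma fh_sm: assumes N: "N > 0"
  shows "fh N (sm N c L f) r = fh N f r * nu N c L r"
proof -
  have "fh N (sm N c L f) r = (\<Sum>m<N. \<Sum>j<L. of_real (f ((m + c * j) mod N)) * ee N (- r * int m)) / (of_nat L * of_nat N)"
    unfolding fh_def sm_def by (simp add: sum_distrib_right sum_divide_distrib[symmetric] of_real_sum)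
  also have "\<dots> = (\<Sum>j<L. \<Sum>m<N. of_real (f ((m + c * j) mod N)) * ee N (- r * int m)) / (of_nat L * of_nat N)"
    by (subst sum.swap) (rule refl)
  also have "\<dots> = (\<Sum>j<L. (\<Sum>m<N. of_real (f m) * ee N (- r * int m)) * ee N (r * int (c * j))) / (of_nat L * of_nat N)"
    by (simp only: shift_sum[OF N])
  also have "\<dots> = ((\<Sum>m<N. of_real (f m) * ee N (- r * int m)) * (\<Sum>j<L. ee N (r * int (c * j)))) / (of_nat L * of_nat N)"
    by (simp only: sum_distrib_left)
  also have "\<dots> = ((\<Sum>m<N. of_real (f m) * ee N (- r * int m)) / of_nat N) * ((\<Sum>j<L. ee N (r * int (c * j))) / of_nat L)"
    by (simp only: times_divide_times_eq mult.commute[of "of_nat L :: complex"])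
  also have "\<dots> = fh N f r * nu N c L r"
    unfolding fh_def nu_def by (rule refl)
  finally show ?thesis .
qed

lemma nu_norm: "cmod (nu N c L r) \<le> 1"
proof (cases "L = 0")
  case True thus ?thesis by (simp add: nu_def)
next
  case False
  have "cmod (\<Sum>j<L. ee N (r * int (c * j))) \<le> (\<Sum>j<L. cmod (ee N (r * int (c * j))))"
    by (rule norm_sum)
  also have "\<dots> = real L" by simp
  finally show ?thesis using False by (simp add: nu_def norm_divide)
qed

lemma ee_near: assumes N: "N > 0" and k: "\<bar>real_of_int s * real c / real N - real_of_int k\<bar> \<le> \<theta>"
  shows "cmod (ee N (s * int (c * j)) - 1) \<le> 2 * pi * real j * \<theta>"
proof -
  let ?x = "2 * pi * real j * (real_of_int s * real c / real N - real_of_int k)"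
  have "2 * pi * real_of_int (s * int (c * j)) / real N = ?x + 2 * pi * real_of_int (int j * k)"
    using N by (simp add: field_simps)
  hence "ee N (s * int (c * j)) = cis (?x + 2 * pi * real_of_int (int j * k))"
    unfolding ee_def by (rule arg_cong)
  also have "\<dots> = cis ?x * cis (2 * pi * real_of_int (int j * k))" by (rule cis_mult[symmetric])
  also have "cis (2 * pi * real_of_int (int j * k)) = 1" by (rule cis_multiple_2pi) simp
  finally have "ee N (s * int (c * j)) = cis ?x" by simp
  hence "cmod (ee N (s * int (c * j)) - 1) \<le> \<bar>?x\<bar>" using norm_cis_minus_1 by simp
  also have "\<bar>?x\<bar> = 2 * pi * real j * \<bar>real_of_int s * real c / real N - real_of_int k\<bar>"
    by (simp add: abs_mult)
  also have "\<dots> \<le> 2 * pi * real j * \<theta>" using k by (intro mult_left_mono) auto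
  finally show ?thesis .
qed

lemma nu_near: assumes N: "N > 0" and L: "L > 0"
  and k: "\<bar>real_of_int s * real c / real N - real_of_int k\<bar> \<le> \<theta>"
  shows "cmod (nu N c L s - 1) \<le> 2 * pi * real L * \<theta>"
proof -
  have th: "\<theta> \<ge> 0" using k by linarith
  have "nu N c L s - 1 = (\<Sum>j<L. ee N (s * int (c * j)) - 1) / of_nat L"
    using L by (simp add: nu_def sum_subtractf field_simps)
  hence "cmod (nu N c L s - 1) = cmod (\<Sum>j<L. ee N (s * int (c * j)) - 1) / real L"
    by (simp add: norm_divide)
  also have "\<dots> \<le> (\<Sum>j<L. 2 * pi * real L * \<theta>) / real L"
  proof (rule divide_right_mono)
    have "cmod (\<Sum>j<L. ee N (s * int (c * j)) - 1) \<le> (\<Sum>j<L. cmod (ee N (s * int (c * j)) - 1))"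
      by (rule norm_sum)
    also have "\<dots> \<le> (\<Sum>j<L. 2 * pi * real L * \<theta>)"
    proof (rule sum_mono)
      fix j assume "j \<in> {..<L}"
      hence "real j \<le> real L" by simp
      hence "2 * pi * real j * \<theta> \<le> 2 * pi * real L * \<theta>" using th by (simp add: mult_right_mono)
      thus "cmod (ee N (s * int (c * j)) - 1) \<le> 2 * pi * real L * \<theta>"
        using ee_near[OF N k, of j] by linarith
    qed
    finally show "cmod (\<Sum>j<L. ee N (s * int (c * j)) - 1) \<le> (\<Sum>j<L. 2 * pi * real L * \<theta>)" .
  qed simp
  also have "\<dots> = 2 * pi * real L * \<theta>" using L by simp
  finally show ?thesis .
qed

lemma fh_norm_le1: assumes f: "\<And>n. n < N \<Longrightarrow> 0 \<le> f n \<and> f n \<le> 1"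
  shows "cmod (fh N f s) \<le> 1"
proof (cases "N = 0")
  case True thus ?thesis by (simp add: fh_def)
next
  case False
  have "cmod (\<Sum>n<N. of_real (f n) * ee N (- s * int n)) \<le> (\<Sum>n<N. cmod (of_real (f n) * ee N (- s * int n)))"
    by (rule norm_sum)
  also have "\<dots> \<le> (\<Sum>n<N. 1)"
    by (rule sum_mono) (use f in \<open>auto simp: norm_mult\<close>)
  finally show ?thesis using False by (simp add: fh_def norm_divide)
qed

lemma prod_err: assumes a: "cmod a \<le> 1" and b: "cmod b \<le> 1"
  shows "cmod (a^2 * b - 1) \<le> cmod (b - 1) + 2 * cmod (a - 1)"
proof -
  have "a^2 * b - 1 = a^2 * (b - 1) + (a - 1) * (a + 1)" by (simp add: algebra_simps power2_eq_square)
  hence "cmod (a^2 * b - 1) \<le> cmod (a^2 * (b - 1)) + cmod ((a - 1) * (a + 1))"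
    by (metis norm_triangle_ineq)
  also have "cmod (a^2 * (b - 1)) \<le> cmod (b - 1)"
  proof -
    have "cmod (a^2) \<le> 1" using a by (simp add: norm_power power_le_one)
    thus ?thesis by (simp add: norm_mult mult_left_le_one_le)
  qed
  also have "cmod ((a - 1) * (a + 1)) \<le> cmod (a - 1) * 2"
  proof -
    have "cmod (a + 1) \<le> 2" using a norm_triangle_ineq[of a 1] by simp
    thus ?thesis by (simp add: norm_mult mult_left_mono)
  qed
  finally show ?thesis by simp
qed

lemma prod_err2: assumes a: "cmod a \<le> 1" and b: "cmod b \<le> 1"
  shows "cmod (a^2 * b - 1) \<le> 2"
proof -
  have "cmod (a^2 * b) \<le> 1" using a b by (simp add: norm_mult norm_power power_le_one mult_le_one)
  thus ?thesis using norm_triangle_ineq4[of "a^2 * b" 1] by simp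
qed

lemma sum_sq_le: assumes f: "\<And>n. n < N \<Longrightarrow> 0 \<le> f n \<and> f n \<le> 1"
  shows "(\<Sum>a<N. (f a)^2) / real N \<le> 1"
proof (cases "N = 0")
  case True thus ?thesis by simp
next
  case False
  have "(\<Sum>a<N. (f a)^2) \<le> (\<Sum>a<N. 1)"
    by (rule sum_mono) (use f in \<open>auto simp: power_le_one\<close>)
  thus ?thesis using False by simp
qed

lemma smooth_est:
  assumes N: "N > 0" and odd: "coprime (-2) (int N)"
  and f: "\<And>n. n < N \<Longrightarrow> 0 \<le> f n \<and> f n \<le> 1" and L: "L > 0" and \<delta>: "\<delta> > 0" and th: "\<theta> \<ge> 0"
  and H: "\<And>r. r < N \<Longrightarrow> \<delta> \<le> cmod (fh N f (-2 * int r)) \<Longrightarrow>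
            \<exists>k::int. \<bar>real r * real c / real N - real_of_int k\<bar> \<le> \<theta>"
  shows "Lambda3 N (sm N c L f) \<le> Lambda3 N f + (2 * \<delta> + 8 * pi * real L * \<theta>)"
proof -
  define E where "E = 2 * \<delta> + 8 * pi * real L * \<theta>"
  define D where "D r = (fh N f (int r))^2 * fh N f (-2 * int r) *
      ((nu N c L (int r))^2 * nu N c L (-2 * int r) - 1)" for r
  have "complex_of_real (Lambda3 N (sm N c L f)) - complex_of_real (Lambda3 N f) = (\<Sum>r<N. D r)"
    unfolding lambda_fourier[OF N] fh_sm[OF N] D_def sum_subtractf[symmetric]
    by (rule sum.cong[OF refl]) (simp add: algebra_simps power2_eq_square)
  hence "Lambda3 N (sm N c L f) - Lambda3 N f \<le> cmod (\<Sum>r<N. D r)"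
    by (metis abs_ge_self norm_of_real of_real_diff)
  also have "\<dots> \<le> (\<Sum>r<N. cmod (D r))" by (rule norm_sum)
  also have "\<dots> \<le> (\<Sum>r<N. (cmod (fh N f (1 * int r)))^2 * E)"
  proof (rule sum_mono)
    fix r assume r: "r \<in> {..<N}"
    have B: "cmod (fh N f (-2 * int r)) * cmod ((nu N c L (int r))^2 * nu N c L (-2 * int r) - 1) \<le> E"
    proof (cases "\<delta> \<le> cmod (fh N f (-2 * int r))")
      case True
      then obtain k :: int where k: "\<bar>real r * real c / real N - real_of_int k\<bar> \<le> \<theta>" using H r by auto
      have k1: "\<bar>real_of_int (int r) * real c / real N - real_of_int k\<bar> \<le> \<theta>" using k by simp
      have "real_of_int (-2 * int r) * real c / real N - real_of_int (-2 * k) = -2 * (real r * real c / real N - real_of_int k)"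
        by (simp add: algebra_simps)
      hence k2: "\<bar>real_of_int (-2 * int r) * real c / real N - real_of_int (-2 * k)\<bar> \<le> 2 * \<theta>" using k by simp
      have n1: "cmod (nu N c L (int r) - 1) \<le> 2 * pi * real L * \<theta>" by (rule nu_near[OF N L k1])
      have n2: "cmod (nu N c L (-2 * int r) - 1) \<le> 2 * pi * real L * (2 * \<theta>)" by (rule nu_near[OF N L k2])
      have "cmod ((nu N c L (int r))^2 * nu N c L (-2 * int r) - 1) \<le> cmod (nu N c L (-2 * int r) - 1) + 2 * cmod (nu N c L (int r) - 1)"
        by (rule prod_err[OF nu_norm nu_norm])
      also have "\<dots> \<le> 8 * pi * real L * \<theta>" using n1 n2 by simp
      finally have "cmod ((nu N c L (int r))^2 * nu N c L (-2 * int r) - 1) \<le> 8 * pi * real L * \<theta>" .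
      moreover have "cmod (fh N f (-2 * int r)) \<le> 1" by (rule fh_norm_le1[OF f])
      ultimately have "cmod (fh N f (-2 * int r)) * cmod ((nu N c L (int r))^2 * nu N c L (-2 * int r) - 1) \<le> 1 * (8 * pi * real L * \<theta>)"
        by (intro mult_mono) auto
      thus ?thesis using \<delta> unfolding E_def by simp
    next
      case False
      have "cmod ((nu N c L (int r))^2 * nu N c L (-2 * int r) - 1) \<le> 2" by (rule prod_err2[OF nu_norm nu_norm])
      hence "cmod (fh N f (-2 * int r)) * cmod ((nu N c L (int r))^2 * nu N c L (-2 * int r) - 1) \<le> \<delta> * 2"
        using False \<delta> by (intro mult_mono) auto
      moreover have "0 \<le> 8 * pi * real L * \<theta>" using th by simp
      ultimately show ?thesis unfolding E_def by linarith
    qed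
    have "cmod (D r) = (cmod (fh N f (int r)))^2 * (cmod (fh N f (-2 * int r)) * cmod ((nu N c L (int r))^2 * nu N c L (-2 * int r) - 1))"
      by (simp add: D_def norm_mult norm_power)
    also have "\<dots> \<le> (cmod (fh N f (int r)))^2 * E" by (rule mult_left_mono[OF B]) simp
    finally show "cmod (D r) \<le> (cmod (fh N f (1 * int r)))^2 * E" by simp
  qed
  also have "\<dots> = (\<Sum>a<N. (f a)^2) / real N * E"
    by (simp only: sum_distrib_right[symmetric] parseval[OF N, of 1] coprime_1_left)
  also have "\<dots> \<le> 1 * E"
  proof (rule mult_right_mono[OF sum_sq_le[OF f]])
    have "0 \<le> 8 * pi * real L * \<theta>" using th by simp
    thus "0 \<le> E" using \<delta> unfolding E_def by linarith
  qed
  finally show ?thesis unfolding E_def by simp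
qed

lemma card_R:
  assumes N: "N > 0" and odd: "coprime (-2) (int N)"
  and f: "\<And>n. n < N \<Longrightarrow> 0 \<le> f n \<and> f n \<le> 1" and \<delta>: "\<delta> > 0"
  shows "real (card {r. r < N \<and> \<delta> \<le> cmod (fh N f (-2 * int r))}) * \<delta>^2 \<le> 1"
proof -
  let ?R = "{r. r < N \<and> \<delta> \<le> cmod (fh N f (-2 * int r))}"
  have sub: "?R \<subseteq> {..<N}" by auto
  have "real (card ?R) * \<delta>^2 = (\<Sum>r\<in>?R. \<delta>^2)" by simp
  also have "\<dots> \<le> (\<Sum>r\<in>?R. (cmod (fh N f (-2 * int r)))^2)"
    by (rule sum_mono) (use \<delta> in \<open>auto intro: power_mono\<close>)
  also have "\<dots> \<le> (\<Sum>r<N. (cmod (fh N f (-2 * int r)))^2)"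
    by (rule sum_mono2[OF _ sub]) auto
  also have "\<dots> = (\<Sum>a<N. (f a)^2) / real N" by (rule parseval[OF N odd])
  also have "\<dots> \<le> 1" by (rule sum_sq_le[OF f])
  finally show ?thesis .
qed

lemma dirichlet:
  fixes x :: "nat \<Rightarrow> real"
  assumes R: "finite R" and M: "M > 0"
  shows "\<exists>c. 1 \<le> c \<and> c \<le> M ^ card R \<and> (\<forall>r\<in>R. \<exists>k::int. \<bar>real c * x r - real_of_int k\<bar> \<le> 1 / real M)"
proof -
  let ?G = "\<exists>c. 1 \<le> c \<and> c \<le> M ^ card R \<and> (\<forall>r\<in>R. \<exists>k::int. \<bar>real c * x r - real_of_int k\<bar> \<le> 1 / real M)"
  define box where "box a = restrict (\<lambda>r. nat \<lfloor>real M * frac (real a * x r)\<rfloor>) R" for a :: nat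
  let ?A = "{..M ^ card R}"
  let ?B = "PiE R (\<lambda>_. {..<M})"
  have img: "box ` ?A \<subseteq> ?B"
  proof
    fix y assume "y \<in> box ` ?A"
    then obtain a where y: "y = box a" by auto
    have "nat \<lfloor>real M * frac (real a * x r)\<rfloor> < M" for r
    proof -
      have "real M * frac (real a * x r) < real M" using frac_lt_1 M by simp
      hence lt: "\<lfloor>real M * frac (real a * x r)\<rfloor> < int M" by (simp add: floor_less_iff)
      have "0 \<le> \<lfloor>real M * frac (real a * x r)\<rfloor>" by simp
      thus ?thesis using lt by (simp add: nat_less_iff)
    qed
    thus "y \<in> ?B" unfolding y box_def by auto
  qed
  have "card (box ` ?A) \<le> card ?B" by (rule card_mono[OF _ img]) (simp add: R finite_PiE)
  also have "card ?B = M ^ card R" using R by (simp add: card_PiE)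
  also have "\<dots> < card ?A" by simp
  finally have "\<not> inj_on box ?A" using pigeonhole by blast
  then obtain a1 a2 where a: "a1 \<in> ?A" "a2 \<in> ?A" "a1 \<noteq> a2" "box a1 = box a2"
    unfolding inj_on_def by blast
  have key: "\<And>a1 a2. a1 \<in> ?A \<Longrightarrow> a2 \<in> ?A \<Longrightarrow> a1 < a2 \<Longrightarrow> box a1 = box a2 \<Longrightarrow> ?G"
  proof -
    fix a1 a2 assume a: "a1 \<in> ?A" "a2 \<in> ?A" "a1 < a2" "box a1 = box a2"
    show ?G
    proof (rule exI[of _ "a2 - a1"], intro conjI ballI)
      show "1 \<le> a2 - a1" using a by simp
      show "a2 - a1 \<le> M ^ card R" using a by simp
      fix r assume r: "r \<in> R"
      let ?u1 = "frac (real a1 * x r)" and ?u2 = "frac (real a2 * x r)"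
      have "nat \<lfloor>real M * ?u1\<rfloor> = nat \<lfloor>real M * ?u2\<rfloor>"
        using fun_cong[OF a(4), of r] r by (simp add: box_def)
      moreover have "\<lfloor>real M * ?u1\<rfloor> \<ge> 0" "\<lfloor>real M * ?u2\<rfloor> \<ge> 0" by simp_all
      ultimately have fl: "\<lfloor>real M * ?u1\<rfloor> = \<lfloor>real M * ?u2\<rfloor>" by (simp add: eq_nat_nat_iff)
      have "\<bar>real M * ?u1 - real M * ?u2\<bar> < 1"
        using fl floor_correct[of "real M * ?u1"] floor_correct[of "real M * ?u2"] by linarith
      moreover have "\<bar>real M * ?u1 - real M * ?u2\<bar> = real M * \<bar>?u2 - ?u1\<bar>"
        by (simp only: right_diff_distrib[symmetric] abs_mult abs_of_nat abs_minus_commute)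
      ultimately have "real M * \<bar>?u2 - ?u1\<bar> < 1" by simp
      hence u: "\<bar>?u2 - ?u1\<bar> < 1 / real M" using M by (simp add: field_simps)
      have "real (a2 - a1) * x r - real_of_int (\<lfloor>real a2 * x r\<rfloor> - \<lfloor>real a1 * x r\<rfloor>) = ?u2 - ?u1"
        using a(3) by (simp add: frac_def of_nat_diff algebra_simps)
      thus "\<exists>k::int. \<bar>real (a2 - a1) * x r - real_of_int k\<bar> \<le> 1 / real M" using u
        by (intro exI[of _ "\<lfloor>real a2 * x r\<rfloor> - \<lfloor>real a1 * x r\<rfloor>"]) simp
    qed
  qed
  show ?thesis
  proof (cases "a1 < a2")
    case True thus ?thesis using key a by blast
  next
    case False hence "a2 < a1" using a(3) by simp
    thus ?thesis using key a by metis
  qed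
qed

definition gsm :: "nat \<Rightarrow> nat \<Rightarrow> nat \<Rightarrow> (nat \<Rightarrow> real) \<Rightarrow> nat \<Rightarrow> real" where
  "gsm N c L f n = (\<Sum>j<L. f ((c * (n + j)) mod N)) / real L"

lemma gsm_dil: "gsm N c L f = dil N c (sm N c L f)"
proof
  fix n
  have "((c * n) mod N + c * j) mod N = (c * (n + j)) mod N" for j
    by (rule nat_mod_eqI) (use modd[of N "c * n"] in \<open>simp add: algebra_simps\<close>)
  thus "gsm N c L f n = dil N c (sm N c L f) n" by (simp add: gsm_def dil_def sm_def)
qed

lemma gsm_range: assumes N: "N > 0" and f: "\<And>n. n < N \<Longrightarrow> 0 \<le> f n \<and> f n \<le> 1" and L: "L > 0"
  shows "0 \<le> gsm N c L f n \<and> gsm N c L f n \<le> 1"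
proof -
  have "\<forall>j. 0 \<le> f ((c * (n + j)) mod N) \<and> f ((c * (n + j)) mod N) \<le> 1" using f N by simp
  hence "0 \<le> (\<Sum>j<L. f ((c * (n + j)) mod N))" by (simp add: sum_nonneg)
  moreover have "(\<Sum>j<L. f ((c * (n + j)) mod N)) \<le> (\<Sum>j<L. 1)"
    by (rule sum_mono) (use f N in simp)
  ultimately have "0 \<le> (\<Sum>j<L. f ((c * (n + j)) mod N))" "(\<Sum>j<L. f ((c * (n + j)) mod N)) \<le> real L"
    by simp_all
  thus ?thesis using L by (simp add: gsm_def)
qed

lemma gsm_sum: assumes N: "N > 0" and cop: "coprime c N" and L: "L > 0"
  shows "(\<Sum>n<N. gsm N c L f n) = (\<Sum>n<N. f n)"
proof -
  have "(\<Sum>n<N. gsm N c L f n) = (\<Sum>n<N. sm N c L f ((c * n) mod N))"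
    by (simp add: gsm_dil dil_def)
  also have "\<dots> = (\<Sum>m<N. sm N c L f m)" by (rule sum_dil[OF N cop])
  also have "\<dots> = (\<Sum>j<L. \<Sum>m<N. f ((m + c * j) mod N)) / real L"
    unfolding sm_def by (simp add: sum_divide_distrib[symmetric]) (rule disjI2, rule sum.swap)
  also have "\<dots> = (\<Sum>j<L. \<Sum>m<N. f m) / real L"
    by (simp only: sum.reindex_bij_betw[OF bij_shift[OF N]])
  also have "\<dots> = (\<Sum>m<N. f m)" using L by simp
  finally show ?thesis .
qed

lemma gsm_Lambda: assumes N: "N > 0" and cop: "coprime c N"
  shows "Lambda3 N (gsm N c L f) = Lambda3 N (sm N c L f)"
  unfolding gsm_dil by (rule Lambda3_dil[OF N cop])

lemma gsm_lip: assumes N: "N > 0" and f: "\<And>n. n < N \<Longrightarrow> 0 \<le> f n \<and> f n \<le> 1" and L: "L > 0"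
  shows "\<bar>gsm N c L f ((n + 1) mod N) - gsm N c L f n\<bar> \<le> 1 / real L"
proof -
  define F where "F m = f ((c * m) mod N)" for m
  have per: "gsm N c L f ((n + 1) mod N) = gsm N c L f (n + 1)"
  proof -
    have "(c * ((n + 1) mod N + j)) mod N = (c * (n + 1 + j)) mod N" for j
    proof (rule nat_mod_eqI)
      have "int N dvd int c * (int ((n + 1) mod N) - int (n + 1))" using modd[of N "n+1"] by simp
      thus "int N dvd int (c * ((n + 1) mod N + j)) - int (c * (n + 1 + j))" by (simp add: algebra_simps)
    qed
    thus ?thesis by (simp add: gsm_def)
  qed
  have "gsm N c L f (n + 1) - gsm N c L f n = (\<Sum>j<L. F (n + Suc j) - F (n + j)) / real L"
    by (simp add: gsm_def F_def sum_subtractf diff_divide_distrib)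
  also have "(\<Sum>j<L. F (n + Suc j) - F (n + j)) = F (n + L) - F (n + 0)"
    using sum_lessThan_telescope[of "\<lambda>j. F (n + j)" L] by simp
  finally have eq: "gsm N c L f (n + 1) - gsm N c L f n = (F (n + L) - F n) / real L" by simp
  have Fb: "0 \<le> F m \<and> F m \<le> 1" for m using f N by (simp add: F_def)
  have "\<bar>F (n + L) - F n\<bar> \<le> 1" using Fb[of "n + L"] Fb[of n] by (simp add: abs_le_iff)
  have "\<bar>gsm N c L f ((n + 1) mod N) - gsm N c L f n\<bar> = \<bar>F (n + L) - F n\<bar> / real L"
    unfolding per eq by (simp add: abs_divide)
  also have "\<dots> \<le> 1 / real L" by (rule divide_right_mono[OF \<open>\<bar>F (n + L) - F n\<bar> \<le> 1\<close>]) simp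
  finally show ?thesis .
qed

lemma smooth_main:
  assumes \<epsilon>: "\<epsilon> > 0"
  shows "\<exists>P0. \<forall>p (f::nat\<Rightarrow>real). prime p \<and> p \<ge> P0 \<and> (\<forall>n<p. 0 \<le> f n \<and> f n \<le> 1) \<longrightarrow>
     (\<exists>g. (\<forall>n. 0 \<le> g n \<and> g n \<le> 1) \<and> (\<Sum>n<p. g n) = (\<Sum>n<p. f n) \<and>
          Lambda3 p g \<le> Lambda3 p f + \<epsilon> \<and> (\<forall>n. \<bar>g ((n + 1) mod p) - g n\<bar> \<le> \<epsilon>))"
proof -
  define \<delta> where "\<delta> = \<epsilon> / 4"
  define L where "L = nat \<lceil>1 / \<epsilon>\<rceil> + 1"
  define M where "M = nat \<lceil>16 * pi * real L / \<epsilon>\<rceil> + 1"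
  define K where "K = nat \<lfloor>1 / \<delta>^2\<rfloor>"
  have \<delta>: "\<delta> > 0" using \<epsilon> by (simp add: \<delta>_def)
  have L0: "L > 0" by (simp add: L_def)
  have M0: "M > 0" by (simp add: M_def)
  have Lbig: "real L > 1 / \<epsilon>" unfolding L_def by linarith
  hence Leps: "1 / real L \<le> \<epsilon>" using \<epsilon> L0 by (simp add: field_simps)
  have Mbig: "real M > 16 * pi * real L / \<epsilon>" unfolding M_def by linarith
  hence "16 * pi * real L < real M * \<epsilon>" using \<epsilon> by (simp add: field_simps)
  hence Meps: "8 * pi * real L * (1 / real M) \<le> \<epsilon> / 2" using M0 by (simp add: field_simps)
  show ?thesis
  proof (intro exI[of _ "M ^ K + 3"] allI impI)
    fix p and f :: "nat \<Rightarrow> real" assume H: "prime p \<and> M ^ K + 3 \<le> p \<and> (\<forall>n<p. 0 \<le> f n \<and> f n \<le> 1)"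
    hence pr: "prime p" and pbig: "M ^ K + 3 \<le> p" and f: "\<And>n. n < p \<Longrightarrow> 0 \<le> f n \<and> f n \<le> 1" by auto
    have N: "p > 0" using pbig by simp
    have "\<not> p dvd 2" using pbig by (auto dest: dvd_imp_le)
    hence "coprime p 2" by (rule prime_imp_coprime[OF pr])
    hence "coprime (int p) 2" by (metis coprime_int_iff of_nat_numeral)
    hence odd: "coprime (-2) (int p)" by (simp add: coprime_commute)
    define R where "R = {r. r < p \<and> \<delta> \<le> cmod (fh p f (-2 * int r))}"
    have finR: "finite R" unfolding R_def by simp
    have "real (card R) * \<delta>^2 \<le> 1" unfolding R_def by (rule card_R[OF N odd f \<delta>])
    hence "real (card R) \<le> 1 / \<delta>^2" using \<delta> by (simp add: field_simps)
    hence "int (card R) \<le> \<lfloor>1 / \<delta>^2\<rfloor>" by (simp add: le_floor_iff)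
    hence cardR: "card R \<le> K" unfolding K_def by linarith
    obtain c where c1: "1 \<le> c" and c2: "c \<le> M ^ card R"
      and ck: "\<forall>r\<in>R. \<exists>k::int. \<bar>real c * (real r / real p) - real_of_int k\<bar> \<le> 1 / real M"
      using dirichlet[OF finR M0, of "\<lambda>r. real r / real p"] by blast
    have "M ^ card R \<le> M ^ K" using cardR M0 by (simp add: power_increasing)
    hence cp: "c < p" using c2 pbig by linarith
    have "\<not> p dvd c" using c1 cp by (auto dest: dvd_imp_le)
    hence cop: "coprime c p" using prime_imp_coprime[OF pr] by (simp add: coprime_commute)
    have Hyp: "\<exists>k::int. \<bar>real r * real c / real p - real_of_int k\<bar> \<le> 1 / real M"
      if "r < p" "\<delta> \<le> cmod (fh p f (-2 * int r))" for r
    proof -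
      have "r \<in> R" using that by (simp add: R_def)
      then obtain k :: int where k: "\<bar>real c * (real r / real p) - real_of_int k\<bar> \<le> 1 / real M" using ck by blast
      have "real c * (real r / real p) = real r * real c / real p" by simp
      hence "\<bar>real r * real c / real p - real_of_int k\<bar> \<le> 1 / real M" using k by (simp add: mult.commute)
      thus ?thesis by blast
    qed
    have est: "Lambda3 p (sm p c L f) \<le> Lambda3 p f + (2 * \<delta> + 8 * pi * real L * (1 / real M))"
      by (rule smooth_est[OF N odd f L0 \<delta> _ Hyp]) simp_all
    define g where "g = gsm p c L f"
    show "\<exists>g. (\<forall>n. 0 \<le> g n \<and> g n \<le> 1) \<and> (\<Sum>n<p. g n) = (\<Sum>n<p. f n) \<and>
          Lambda3 p g \<le> Lambda3 p f + \<epsilon> \<and> (\<forall>n. \<bar>g ((n + 1) mod p) - g n\<bar> \<le> \<epsilon>)"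
    proof (intro exI[of _ g] conjI allI)
      fix n show "0 \<le> g n" "g n \<le> 1" using gsm_range[OF N f L0] by (auto simp: g_def)
    next
      show "(\<Sum>n<p. g n) = (\<Sum>n<p. f n)" unfolding g_def by (rule gsm_sum[OF N cop L0])
    next
      have "Lambda3 p g = Lambda3 p (sm p c L f)" unfolding g_def by (rule gsm_Lambda[OF N cop])
      also have "\<dots> \<le> Lambda3 p f + (2 * \<delta> + 8 * pi * real L * (1 / real M))" by (rule est)
      also have "\<dots> \<le> Lambda3 p f + \<epsilon>" using Meps by (simp add: \<delta>_def)
      finally show "Lambda3 p g \<le> Lambda3 p f + \<epsilon>" .
    next
      fix n
      have "\<bar>g ((n + 1) mod p) - g n\<bar> \<le> 1 / real L" unfolding g_def by (rule gsm_lip[OF N f L0])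
      thus "\<bar>g ((n + 1) mod p) - g n\<bar> \<le> \<epsilon>" using Leps by linarith
    qed
  qed
qed

lemma xmod: assumes q: "q > 0" and p: "p > 0"
  shows "(s mod q) * p div q = (s * p div q) mod (p::nat)"
proof -
  have "s * p = (s mod q) * p + ((s div q) * p) * q" by (metis div_mult_mod_eq add.commute mult.commute mult.left_commute distrib_right)
  hence "s * p div q = (s div q) * p + (s mod q) * p div q" using q by simp
  moreover have "(s mod q) * p div q < p"
  proof -
    have "(s mod q) * p < q * p" using q p by simp
    thus ?thesis by (simp add: div_less_iff_less_mult q mult.commute)
  qed
  ultimately show ?thesis by simp
qed

lemma div_add_bound: assumes q: "(q::nat) > 0"
  shows "\<exists>e\<le>1. (a + b) div q = a div q + b div q + e"
proof -
  have "(a mod q + b mod q) div q \<le> 1"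
  proof -
    have "a mod q < q" "b mod q < q" using q by simp_all
    hence "a mod q + b mod q < 2 * q" by linarith
    hence "(a mod q + b mod q) div q < 2" by (simp add: div_less_iff_less_mult q)
    thus ?thesis by simp
  qed
  thus ?thesis using div_add1_eq[of a b q] by blast
qed

lemma x_add1: assumes q: "q > 0" and p: "p > 0"
  shows "\<exists>e\<le>1. ((m + d) mod q) * p div q = (m * p div q + d * p div q + e) mod (p::nat)"
proof -
  obtain e where e: "e \<le> 1" "(m * p + d * p) div q = m * p div q + d * p div q + e"
    using div_add_bound[OF q] by blast
  have "((m + d) mod q) * p div q = ((m + d) * p div q) mod p" by (rule xmod[OF q p])
  also have "(m + d) * p = m * p + d * p" by (simp add: distrib_right)
  finally show ?thesis using e by auto
qed

lemma x_add2: assumes q: "q > 0" and p: "p > 0"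
  shows "\<exists>e\<le>2. ((m + 2 * d) mod q) * p div q = (m * p div q + 2 * (d * p div q) + e) mod (p::nat)"
proof -
  obtain e1 where e1: "e1 \<le> 1" "(m * p + (d * p + d * p)) div q = m * p div q + (d * p + d * p) div q + e1"
    using div_add_bound[OF q] by blast
  obtain e2 where e2: "e2 \<le> 1" "(d * p + d * p) div q = d * p div q + d * p div q + e2"
    using div_add_bound[OF q] by blast
  have "((m + 2 * d) mod q) * p div q = ((m + 2 * d) * p div q) mod p" by (rule xmod[OF q p])
  also have "(m + 2 * d) * p = m * p + (d * p + d * p)" by (simp add: algebra_simps)
  finally have "((m + 2 * d) mod q) * p div q = (m * p div q + (d * p div q + d * p div q + e2) + e1) mod p"
    using e1 e2 by simp
  also have "m * p div q + (d * p div q + d * p div q + e2) + e1 = m * p div q + 2 * (d * p div q) + (e1 + e2)"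
    by simp
  finally have "((m + 2 * d) mod q) * p div q = (m * p div q + 2 * (d * p div q) + (e1 + e2)) mod p" .
  thus ?thesis using e1 e2 by (intro exI[of _ "e1 + e2"]) simp
qed

lemma lip_e: assumes lip: "\<And>n. \<bar>g ((n + 1) mod p) - g n\<bar> \<le> (lam::real)"
  shows "\<bar>g ((a + e) mod p) - g (a mod p)\<bar> \<le> real e * lam"
proof (induction e)
  case 0 thus ?case by simp
next
  case (Suc e)
  have "g ((a + Suc e) mod p) = g (((a + e) mod p + 1) mod p)" by (simp add: mod_Suc_eq)
  hence "\<bar>g ((a + Suc e) mod p) - g ((a + e) mod p)\<bar> \<le> lam" using lip[of "(a + e) mod p"] by simp
  thus ?case using Suc by (simp add: algebra_simps)
qed

lemma prod_bound:
  fixes a b c b' c' :: real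
  assumes "0 \<le> a" "a \<le> 1" "0 \<le> b" "b \<le> 1" "0 \<le> c" "c \<le> 1" "0 \<le> b'" "b' \<le> 1" "0 \<le> c'" "c' \<le> 1"
  shows "a * b * c \<le> a * b' * c' + \<bar>b - b'\<bar> + \<bar>c - c'\<bar>"
proof -
  have e: "a * b * c - a * b' * c' = (a * c) * (b - b') + (a * b') * (c - c')" by (simp add: algebra_simps)
  have "(a * c) * (b - b') \<le> \<bar>b - b'\<bar>"
  proof -
    have "(a * c) * (b - b') \<le> \<bar>(a * c) * (b - b')\<bar>" by simp
    also have "\<dots> = (a * c) * \<bar>b - b'\<bar>" using assms by (simp add: abs_mult)
    also have "\<dots> \<le> 1 * \<bar>b - b'\<bar>" using assms by (intro mult_right_mono mult_le_one) auto
    finally show ?thesis by simp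
  qed
  moreover have "(a * b') * (c - c') \<le> \<bar>c - c'\<bar>"
  proof -
    have "(a * b') * (c - c') \<le> \<bar>(a * b') * (c - c')\<bar>" by simp
    also have "\<dots> = (a * b') * \<bar>c - c'\<bar>" using assms by (simp add: abs_mult)
    also have "\<dots> \<le> 1 * \<bar>c - c'\<bar>" using assms by (intro mult_right_mono mult_le_one) auto
    finally show ?thesis by simp
  qed
  ultimately show ?thesis using e by linarith
qed

lemma fiber_card: assumes q: "q > 0" and p: "p > 0"
  shows "real (card {m. m < q \<and> m * p div q = y}) \<le> real q / real p + 1"
proof (cases "{m. m < q \<and> m * p div q = y} = {}")
  case True
  have "0 \<le> real q / real p + 1" by simp
  thus ?thesis by (simp only: True card.empty of_nat_0)
next
  case False
  let ?S = "{m. m < q \<and> m * p div q = y}"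
  have fin: "finite ?S" by simp
  define m0 where "m0 = Min ?S"
  have m0S: "m0 \<in> ?S" unfolding m0_def using Min_in[OF fin False] .
  define k where "k = nat \<lceil>real q / real p\<rceil>"
  have sub: "?S \<subseteq> {m0..<m0 + k}"
  proof
    fix m assume mS: "m \<in> ?S"
    have "m0 \<le> m" unfolding m0_def using Min_le[OF fin mS] .
    have "y * q \<le> m0 * p"
    proof -
      have e: "m0 * p div q = y" using m0S by simp
      have "m0 * p div q * q \<le> m0 * p" by (rule div_times_less_eq_dividend)
      thus ?thesis unfolding e .
    qed
    moreover have "m * p < y * q + q"
    proof -
      have e: "m * p div q = y" using mS by simp
      have "m * p = m * p div q * q + m * p mod q" by simp
      moreover have "m * p mod q < q" using q by simp
      ultimately have "m * p < m * p div q * q + q" by linarith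
      thus ?thesis unfolding e .
    qed
    moreover have "m0 * p \<le> m * p" using \<open>m0 \<le> m\<close> by simp
    ultimately have "m * p - m0 * p < q" by arith
    hence "(m - m0) * p < q" by (simp add: diff_mult_distrib)
    hence "real (m - m0) * real p < real q" by (metis of_nat_less_iff of_nat_mult)
    hence "real (m - m0) < real q / real p" using p by (simp add: field_simps)
    hence "real (m - m0) < real k" unfolding k_def by linarith
    hence "m - m0 < k" by simp
    thus "m \<in> {m0..<m0 + k}" using \<open>m0 \<le> m\<close> by simp
  qed
  have "card ?S \<le> k" using card_mono[OF _ sub] by simp
  hence "real (card ?S) \<le> real k" by simp
  also have "real k \<le> real q / real p + 1"
  proof -
    have x0: "0 \<le> real q / real p" by simp
    hence "real k = real_of_int \<lceil>real q / real p\<rceil>" unfolding k_def by simp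
    thus ?thesis using ceiling_correct[of "real q / real p"] by linarith
  qed
  finally show ?thesis .
qed

lemma fiber_sum: fixes F :: "nat \<Rightarrow> real" assumes q: "q > 0" and p: "p > 0"
  shows "(\<Sum>m<q. F (m * p div q)) = (\<Sum>y<p. real (card {m. m < q \<and> m * p div q = y}) * F y)"
proof -
  have img: "(\<lambda>m. m * p div q) ` {..<q} \<subseteq> {..<p}"
  proof
    fix z assume "z \<in> (\<lambda>m. m * p div q) ` {..<q}"
    then obtain m where m: "m < q" "z = m * p div q" by auto
    have "m * p < q * p" using m p by simp
    thus "z \<in> {..<p}" using m by (simp add: div_less_iff_less_mult q mult.commute)
  qed
  have "(\<Sum>m<q. F (m * p div q)) = (\<Sum>y<p. \<Sum>m\<in>{m \<in> {..<q}. m * p div q = y}. F (m * p div q))"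
    by (rule sum.group[symmetric, OF _ _ img]) auto
  also have "\<dots> = (\<Sum>y<p. real (card {m. m < q \<and> m * p div q = y}) * F y)"
  proof (rule sum.cong[OF refl])
    fix y
    have "(\<Sum>m\<in>{m \<in> {..<q}. m * p div q = y}. F (m * p div q)) = (\<Sum>m\<in>{m \<in> {..<q}. m * p div q = y}. F y)"
      by (rule sum.cong) auto
    also have "{m \<in> {..<q}. m * p div q = y} = {m. m < q \<and> m * p div q = y}" by auto
    finally show "(\<Sum>m\<in>{m \<in> {..<q}. m * p div q = y}. F (m * p div q)) = real (card {m. m < q \<and> m * p div q = y}) * F y"
      by simp
  qed
  finally show ?thesis .
qed

lemma Lambda_bounds: assumes p: "p > 0" and g: "\<And>n. 0 \<le> g n \<and> g n \<le> 1"
  shows "0 \<le> Lambda3 p g" "Lambda3 p g \<le> 1"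
proof -
  have t: "0 \<le> g n * g ((n + d) mod p) * g ((n + 2 * d) mod p) \<and> g n * g ((n + d) mod p) * g ((n + 2 * d) mod p) \<le> 1" for n d
    using g[of n] g[of "(n + d) mod p"] g[of "(n + 2 * d) mod p"] by (auto intro: mult_le_one)
  have "0 \<le> (\<Sum>n<p. \<Sum>d<p. g n * g ((n + d) mod p) * g ((n + 2 * d) mod p))"
    using t by (simp add: sum_nonneg)
  thus "0 \<le> Lambda3 p g" by (simp add: Lambda3_def)
  have "(\<Sum>n<p. \<Sum>d<p. g n * g ((n + d) mod p) * g ((n + 2 * d) mod p)) \<le> (\<Sum>n<p. \<Sum>d<p. 1)"
    by (intro sum_mono) (use t in blast)
  also have "\<dots> = (real p)^2" by (simp add: power2_eq_square)
  finally show "Lambda3 p g \<le> 1" using p by (simp add: Lambda3_def)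
qed

lemma transfer:
  assumes p: "p > 0" and q: "q \<ge> p" and g: "\<And>n. 0 \<le> g n \<and> g n \<le> 1" and lam: "lam \<ge> 0"
    and lip: "\<And>n. \<bar>g ((n + 1) mod p) - g n\<bar> \<le> lam"
  shows "(\<Sum>m<q. g (m * p div q)) / real q \<ge> (\<Sum>n<p. g n) / real p - real p / real q"
    and "Lambda3 q (\<lambda>m. g (m * p div q)) \<le> Lambda3 p g + 3 * (real p / real q) + 3 * lam"
proof -
  have q0: "q > 0" using p q by simp
  define cnt where "cnt y = real (card {m. m < q \<and> m * p div q = y})" for y
  define B where "B = real q / real p + 1"
  have cntB: "0 \<le> cnt y \<and> cnt y \<le> B" for y unfolding cnt_def B_def using fiber_card[OF q0 p] by simp
  have fs: "(\<Sum>m<q. F (m * p div q)) = (\<Sum>y<p. cnt y * F y)" for F :: "nat \<Rightarrow> real"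
    unfolding cnt_def by (rule fiber_sum[OF q0 p])
  define G where "G = (\<Sum>n<p. g n)"
  have "real q = (\<Sum>y<p. cnt y)" using fs[of "\<lambda>_. 1"] by simp
  have eqS: "(\<Sum>m<q. g (m * p div q)) = (\<Sum>y<p. cnt y) - (\<Sum>y<p. cnt y * (1 - g y))"
    using fs[of g] by (simp add: algebra_simps sum_subtractf)
  have "(\<Sum>y<p. cnt y * (1 - g y)) \<le> (\<Sum>y<p. B * (1 - g y))"
    by (rule sum_mono, rule mult_right_mono) (use cntB g in auto)
  also have "(\<Sum>y<p. B * (1 - g y)) = B * (real p - G)"
    by (simp add: G_def sum_distrib_left[symmetric] sum_subtractf)
  finally have "(\<Sum>m<q. g (m * p div q)) \<ge> real q - B * (real p - G)"
    using eqS \<open>real q = (\<Sum>y<p. cnt y)\<close> by linarith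
  moreover have "real q - B * (real p - G) = real q * G / real p - real p + G"
    using p by (simp add: B_def field_simps)
  moreover have "G \<ge> 0" unfolding G_def using g by (simp add: sum_nonneg)
  ultimately have "(\<Sum>m<q. g (m * p div q)) \<ge> real q * G / real p - real p" by linarith
  hence "(\<Sum>m<q. g (m * p div q)) / real q \<ge> (real q * G / real p - real p) / real q"
    using q0 by (simp add: divide_right_mono)
  also have "(real q * G / real p - real p) / real q = G / real p - real p / real q"
    using q0 p by (simp add: field_simps)
  finally show "(\<Sum>m<q. g (m * p div q)) / real q \<ge> (\<Sum>n<p. g n) / real p - real p / real q"
    by (simp add: G_def)
next
  have q0: "q > 0" using p q by simp
  define cnt where "cnt y = real (card {m. m < q \<and> m * p div q = y})" for y
  define B where "B = real q / real p + 1"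
  have cntB: "0 \<le> cnt y \<and> cnt y \<le> B" for y unfolding cnt_def B_def using fiber_card[OF q0 p] by simp
  have fs: "(\<Sum>m<q. F (m * p div q)) = (\<Sum>y<p. cnt y * F y)" for F :: "nat \<Rightarrow> real"
    unfolding cnt_def by (rule fiber_sum[OF q0 p])
  define h where "h m = g (m * p div q)" for m
  define G2 where "G2 a b = g a * g ((a + b) mod p) * g ((a + 2 * b) mod p)" for a b
  have G2nn: "0 \<le> G2 a b" for a b unfolding G2_def using g by simp
  have step1: "h m * h ((m + d) mod q) * h ((m + 2 * d) mod q) \<le> G2 (m * p div q) (d * p div q) + 3 * lam" for m d
  proof -
    let ?a = "m * p div q" and ?b = "d * p div q"
    obtain e1 where e1: "e1 \<le> 1" "((m + d) mod q) * p div q = (?a + ?b + e1) mod p"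
      using x_add1[OF q0 p] by blast
    obtain e2 where e2: "e2 \<le> 2" "((m + 2 * d) mod q) * p div q = (?a + 2 * ?b + e2) mod p"
      using x_add2[OF q0 p] by blast
    have d1: "\<bar>g ((?a + ?b + e1) mod p) - g ((?a + ?b) mod p)\<bar> \<le> lam"
    proof -
      have "\<bar>g ((?a + ?b + e1) mod p) - g ((?a + ?b) mod p)\<bar> \<le> real e1 * lam" by (rule lip_e[where g=g and p=p and lam=lam, OF lip])
      also have "\<dots> \<le> 1 * lam" using e1 lam by (intro mult_right_mono) auto
      finally show ?thesis by simp
    qed
    have d2: "\<bar>g ((?a + 2 * ?b + e2) mod p) - g ((?a + 2 * ?b) mod p)\<bar> \<le> 2 * lam"
    proof -
      have "\<bar>g ((?a + 2 * ?b + e2) mod p) - g ((?a + 2 * ?b) mod p)\<bar> \<le> real e2 * lam" by (rule lip_e[where g=g and p=p and lam=lam, OF lip])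
      also have "\<dots> \<le> 2 * lam" using e2 lam by (intro mult_right_mono) auto
      finally show ?thesis .
    qed
    have "h m * h ((m + d) mod q) * h ((m + 2 * d) mod q) =
          g ?a * g ((?a + ?b + e1) mod p) * g ((?a + 2 * ?b + e2) mod p)"
      unfolding h_def e1(2) e2(2) by simp
    also have "\<dots> \<le> g ?a * g ((?a + ?b) mod p) * g ((?a + 2 * ?b) mod p)
        + \<bar>g ((?a + ?b + e1) mod p) - g ((?a + ?b) mod p)\<bar> + \<bar>g ((?a + 2 * ?b + e2) mod p) - g ((?a + 2 * ?b) mod p)\<bar>"
      by (rule prod_bound) (use g in auto)
    also have "\<dots> \<le> G2 ?a ?b + 3 * lam" using d1 d2 unfolding G2_def by linarith
    finally show ?thesis .
  qed
  have "(\<Sum>m<q. \<Sum>d<q. h m * h ((m + d) mod q) * h ((m + 2 * d) mod q)) \<le>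
        (\<Sum>m<q. \<Sum>d<q. G2 (m * p div q) (d * p div q) + 3 * lam)"
    by (intro sum_mono step1)
  also have "\<dots> = (\<Sum>m<q. \<Sum>d<q. G2 (m * p div q) (d * p div q)) + (real q)^2 * (3 * lam)"
    by (simp add: sum.distrib power2_eq_square)
  also have "(\<Sum>m<q. \<Sum>d<q. G2 (m * p div q) (d * p div q)) = (\<Sum>a<p. cnt a * (\<Sum>b<p. cnt b * G2 a b))"
  proof -
    have "(\<Sum>m<q. \<Sum>d<q. G2 (m * p div q) (d * p div q)) = (\<Sum>m<q. \<Sum>b<p. cnt b * G2 (m * p div q) b)"
      by (rule sum.cong[OF refl], rule fs)
    also have "\<dots> = (\<Sum>a<p. cnt a * (\<Sum>b<p. cnt b * G2 a b))" by (rule fs)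
    finally show ?thesis .
  qed
  also have "(\<Sum>a<p. cnt a * (\<Sum>b<p. cnt b * G2 a b)) \<le> (\<Sum>a<p. B * (\<Sum>b<p. B * G2 a b))"
  proof (rule sum_mono)
    fix a
    have i: "(\<Sum>b<p. cnt b * G2 a b) \<le> (\<Sum>b<p. B * G2 a b)"
      by (rule sum_mono, rule mult_right_mono) (use cntB G2nn in auto)
    have "0 \<le> (\<Sum>b<p. cnt b * G2 a b)" using cntB G2nn by (simp add: sum_nonneg)
    thus "cnt a * (\<Sum>b<p. cnt b * G2 a b) \<le> B * (\<Sum>b<p. B * G2 a b)"
      using i cntB[of a] by (intro mult_mono) auto
  qed
  also have "(\<Sum>a<p. B * (\<Sum>b<p. B * G2 a b)) = B^2 * (\<Sum>a<p. \<Sum>b<p. G2 a b)"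
    by (simp add: sum_distrib_left power2_eq_square mult.assoc)
  also have "(\<Sum>a<p. \<Sum>b<p. G2 a b) = (real p)^2 * Lambda3 p g"
    using p by (simp add: Lambda3_def G2_def)
  finally have S: "(\<Sum>m<q. \<Sum>d<q. h m * h ((m + d) mod q) * h ((m + 2 * d) mod q))
      \<le> B^2 * ((real p)^2 * Lambda3 p g) + (real q)^2 * (3 * lam)" by simp
  define t where "t = real p / real q"
  have t01: "0 \<le> t" "t \<le> 1" using q q0 by (auto simp: t_def)
  have Bq: "B^2 * (real p)^2 / (real q)^2 = (1 + t)^2"
    using p q0 by (simp add: B_def t_def field_simps power2_eq_square)
  have "Lambda3 q h = (\<Sum>m<q. \<Sum>d<q. h m * h ((m + d) mod q) * h ((m + 2 * d) mod q)) / (real q)^2"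
    by (simp add: Lambda3_def)
  also have "\<dots> \<le> (B^2 * ((real p)^2 * Lambda3 p g) + (real q)^2 * (3 * lam)) / (real q)^2"
    by (rule divide_right_mono[OF S]) simp
  also have "\<dots> = (1 + t)^2 * Lambda3 p g + 3 * lam"
    using q0 Bq by (simp add: add_divide_distrib field_simps)
  also have "\<dots> \<le> Lambda3 p g + 3 * t + 3 * lam"
  proof -
    have L01: "0 \<le> Lambda3 p g" "Lambda3 p g \<le> 1" using Lambda_bounds[OF p g] by auto
    have e: "(1 + t)^2 * Lambda3 p g = Lambda3 p g + (2 * t + t^2) * Lambda3 p g" by (simp add: power2_eq_square algebra_simps)
    have "0 \<le> 2 * t + t^2" using t01 by simp
    hence a: "(2 * t + t^2) * Lambda3 p g \<le> 2 * t + t^2" using mult_left_mono[OF L01(2), of "2 * t + t^2"] by simp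
    have b: "t^2 \<le> t" using t01 by (simp add: power2_eq_square mult_le_one mult_right_le_one_le)
    show ?thesis using e a b by linarith
  qed
  finally show "Lambda3 q (\<lambda>m. g (m * p div q)) \<le> Lambda3 p g + 3 * (real p / real q) + 3 * lam"
    by (simp add: h_def[abs_def] t_def)
qed

lemma Lambda_bounds':
  assumes p: "p > 0" and g: "\<And>n. n < p \<Longrightarrow> 0 \<le> g n \<and> g n \<le> 1"
  shows "0 \<le> Lambda3 p g" "Lambda3 p g \<le> 1"
proof -
  have t: "0 \<le> g n * g ((n + d) mod p) * g ((n + 2 * d) mod p) \<and> g n * g ((n + d) mod p) * g ((n + 2 * d) mod p) \<le> 1"
    if "n < p" for n d
    using g[OF that] g[of "(n + d) mod p"] g[of "(n + 2 * d) mod p"] p by (auto intro: mult_le_one)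
  have "0 \<le> (\<Sum>n<p. \<Sum>d<p. g n * g ((n + d) mod p) * g ((n + 2 * d) mod p))"
    by (intro sum_nonneg) (use t in auto)
  thus "0 \<le> Lambda3 p g" by (simp add: Lambda3_def)
  have "(\<Sum>n<p. \<Sum>d<p. g n * g ((n + d) mod p) * g ((n + 2 * d) mod p)) \<le> (\<Sum>n<p. \<Sum>d<p. 1)"
    by (intro sum_mono) (use t in auto)
  also have "\<dots> = (real p)^2" by (simp add: power2_eq_square)
  finally show "Lambda3 p g \<le> 1" using p by (simp add: Lambda3_def)
qed

lemma one_in_family: assumes "N > 0" "v \<le> 1" shows "(\<lambda>_. 1) \<in> family N v"
  using assms by (simp add: family_def expect_def)

lemma Lambda_one: assumes N: "N > 0" and f: "\<And>n. n < N \<Longrightarrow> f n = 1" shows "Lambda3 N f = 1"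
proof -
  have "(\<Sum>n<N. \<Sum>d<N. f n * f ((n + d) mod N) * f ((n + 2 * d) mod N)) = (\<Sum>n<N. \<Sum>d<N. 1)"
    using f N by (intro sum.cong refl) simp
  thus ?thesis using N by (simp add: Lambda3_def power2_eq_square)
qed

lemma rho_lower: assumes N: "N > 0" and f: "f \<in> family N v" shows "rho v N \<le> Lambda3 N f"
  unfolding rho_def
proof (rule cInf_lower)
  show "Lambda3 N f \<in> Lambda3 N ` family N v" using f by simp
  show "bdd_below (Lambda3 N ` family N v)"
    by (rule bdd_belowI[of _ 0]) (auto simp: family_def intro: Lambda_bounds'(1)[OF N])
qed

lemma rho_nonneg: assumes N: "N > 0" and v: "v \<le> 1" shows "0 \<le> rho v N"
  unfolding rho_def
proof (rule cInf_greatest)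
  show "Lambda3 N ` family N v \<noteq> {}" using one_in_family[OF N v] by blast
  fix x assume "x \<in> Lambda3 N ` family N v"
  thus "0 \<le> x" by (auto simp: family_def intro: Lambda_bounds'(1)[OF N])
qed

lemma rho_le1: assumes N: "N > 0" and v: "v \<le> 1" shows "rho v N \<le> 1"
  using rho_lower[OF N one_in_family[OF N v]] Lambda_one[OF N, of "\<lambda>_. 1"] by simp

lemma rho_approx: assumes N: "N > 0" and v: "v \<le> 1" and e: "e > 0"
  shows "\<exists>f\<in>family N v. Lambda3 N f < rho v N + e"
proof -
  have ne: "Lambda3 N ` family N v \<noteq> {}" using one_in_family[OF N v] by blast
  have lt: "Inf (Lambda3 N ` family N v) < rho v N + e" using e by (simp add: rho_def)
  obtain y where "y \<in> Lambda3 N ` family N v" "y < rho v N + e" using cInf_lessD[OF ne lt] by blast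
  thus ?thesis by blast
qed

lemma rho_v1: assumes N: "N > 0" shows "rho 1 N = 1"
proof -
  have "\<And>f. f \<in> family N 1 \<Longrightarrow> Lambda3 N f = 1"
  proof -
    fix f assume f: "f \<in> family N 1"
    hence b: "\<And>n. n < N \<Longrightarrow> 0 \<le> f n \<and> f n \<le> 1" and m: "(\<Sum>n<N. f n) / real N \<ge> 1"
      by (auto simp: family_def expect_def)
    have "(\<Sum>n<N. f n) \<ge> real N" using m N by (simp add: field_simps)
    hence "(\<Sum>n<N. 1 - f n) \<le> 0" by (simp add: sum_subtractf)
    moreover have "\<forall>n\<in>{..<N}. 0 \<le> 1 - f n" using b by simp
    ultimately have "\<forall>n\<in>{..<N}. 1 - f n = 0"
      using sum_nonneg_eq_0_iff[of "{..<N}" "\<lambda>n. 1 - f n"] sum_nonneg[of "{..<N}" "\<lambda>n. 1 - f n"] by auto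
    thus "Lambda3 N f = 1" by (intro Lambda_one[OF N]) auto
  qed
  hence "Lambda3 N ` family N 1 = {1}" using one_in_family[OF N, of 1] by auto
  thus ?thesis by (simp add: rho_def)
qed

lemma mix_prod:
  fixes a b c a' b' c' :: real
  assumes "0 \<le> a" "a \<le> 1" "0 \<le> b" "b \<le> 1" "0 \<le> c" "c \<le> 1" "0 \<le> a'" "a' \<le> 1" "0 \<le> b'" "b' \<le> 1" "0 \<le> c'" "c' \<le> 1"
  shows "a' * b' * c' \<le> a * b * c + \<bar>a' - a\<bar> + \<bar>b' - b\<bar> + \<bar>c' - c\<bar>"
proof -
  have 1: "a' * b' * c' \<le> a' * b * c + \<bar>b' - b\<bar> + \<bar>c' - c\<bar>" by (rule prod_bound) (use assms in auto)
  have "a' * b * c - a * b * c = (b * c) * (a' - a)" by (simp add: algebra_simps)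
  also have "\<dots> \<le> \<bar>(b * c) * (a' - a)\<bar>" by simp
  also have "\<dots> = (b * c) * \<bar>a' - a\<bar>" using assms by (simp add: abs_mult)
  also have "\<dots> \<le> 1 * \<bar>a' - a\<bar>" using assms by (intro mult_right_mono mult_le_one) auto
  finally have 2: "a' * b * c - a * b * c \<le> 1 * \<bar>a' - a\<bar>" .
  hence "a' * b * c - a * b * c \<le> \<bar>a' - a\<bar>" by simp
  thus ?thesis using 1 by linarith
qed

lemma Lambda_mix:
  assumes q: "q > 0" and h: "\<And>n. 0 \<le> h n \<and> h n \<le> 1" and \<eta>: "0 \<le> \<eta>" "\<eta> \<le> 1"
  shows "Lambda3 q (\<lambda>m. (1 - \<eta>) * h m + \<eta>) \<le> Lambda3 q h + 3 * \<eta>"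
proof -
  define h' where "h' m = (1 - \<eta>) * h m + \<eta>" for m
  have h'b: "0 \<le> h' m \<and> h' m \<le> 1" for m
  proof -
    have "0 \<le> (1 - \<eta>) * h m" using h[of m] \<eta> by simp
    moreover have "(1 - \<eta>) * h m \<le> (1 - \<eta>) * 1" using h[of m] \<eta> by (intro mult_left_mono) auto
    ultimately have "0 \<le> (1 - \<eta>) * h m" "(1 - \<eta>) * h m \<le> 1 - \<eta>" by simp_all
    thus ?thesis using \<eta> by (simp add: h'_def)
  qed
  have d: "\<bar>h' m - h m\<bar> \<le> \<eta>" for m
  proof -
    have "h' m - h m = \<eta> * (1 - h m)" by (simp add: h'_def algebra_simps)
    moreover have "0 \<le> \<eta> * (1 - h m)" using h[of m] \<eta> by simp
    moreover have "\<eta> * (1 - h m) \<le> \<eta> * 1" using h[of m] \<eta> by (intro mult_left_mono) auto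
    ultimately show ?thesis by simp
  qed
  have "(\<Sum>n<q. \<Sum>d<q. h' n * h' ((n + d) mod q) * h' ((n + 2 * d) mod q)) \<le>
        (\<Sum>n<q. \<Sum>d<q. h n * h ((n + d) mod q) * h ((n + 2 * d) mod q) + 3 * \<eta>)"
  proof (intro sum_mono)
    fix n d
    have "h' n * h' ((n + d) mod q) * h' ((n + 2 * d) mod q) \<le> h n * h ((n + d) mod q) * h ((n + 2 * d) mod q)
       + \<bar>h' n - h n\<bar> + \<bar>h' ((n + d) mod q) - h ((n + d) mod q)\<bar> + \<bar>h' ((n + 2 * d) mod q) - h ((n + 2 * d) mod q)\<bar>"
      by (rule mix_prod) (use h h'b in auto)
    thus "h' n * h' ((n + d) mod q) * h' ((n + 2 * d) mod q) \<le> h n * h ((n + d) mod q) * h ((n + 2 * d) mod q) + 3 * \<eta>"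
      using d[of n] d[of "(n + d) mod q"] d[of "(n + 2 * d) mod q"] by linarith
  qed
  also have "\<dots> = (\<Sum>n<q. \<Sum>d<q. h n * h ((n + d) mod q) * h ((n + 2 * d) mod q)) + (real q)^2 * (3 * \<eta>)"
    by (simp add: sum.distrib power2_eq_square)
  finally have "(\<Sum>n<q. \<Sum>d<q. h' n * h' ((n + d) mod q) * h' ((n + 2 * d) mod q)) / (real q)^2 \<le>
      ((\<Sum>n<q. \<Sum>d<q. h n * h ((n + d) mod q) * h ((n + 2 * d) mod q)) + (real q)^2 * (3 * \<eta>)) / (real q)^2"
    by (rule divide_right_mono) simp
  also have "\<dots> = Lambda3 q h + 3 * \<eta>" using q by (simp add: Lambda3_def add_divide_distrib)
  finally show ?thesis by (simp add: Lambda3_def h'_def[abs_def])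
qed

lemma KS:
  assumes v0: "0 < v" and v1: "v < 1" and \<epsilon>: "\<epsilon> > 0"
  shows "\<exists>P0. \<forall>p. prime p \<and> p \<ge> P0 \<longrightarrow> (\<exists>Q. \<forall>q\<ge>Q. rho v q \<le> rho v p + \<epsilon>)"
proof -
  have e12: "\<epsilon> / 12 > 0" using \<epsilon> by simp
  obtain P0 where P0: "\<And>p f. prime p \<and> p \<ge> P0 \<and> (\<forall>n<p. 0 \<le> f n \<and> f n \<le> 1) \<Longrightarrow>
     (\<exists>g. (\<forall>n. 0 \<le> g n \<and> g n \<le> 1) \<and> (\<Sum>n<p. g n) = (\<Sum>n<p. f n) \<and>
          Lambda3 p g \<le> Lambda3 p f + \<epsilon> / 12 \<and> (\<forall>n. \<bar>g ((n + 1) mod p) - g n\<bar> \<le> \<epsilon> / 12))"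
    using smooth_main[OF e12] by blast
  show ?thesis
  proof (rule exI[of _ P0], intro allI impI)
    fix p assume pp: "prime p \<and> P0 \<le> p"
    have p0: "p > 0" using pp prime_gt_0_nat by blast
    obtain f where f: "f \<in> family p v" and fl: "Lambda3 p f < rho v p + \<epsilon> / 12"
      using rho_approx[OF p0 _ e12, of v] v1 by auto
    have fb: "\<forall>n<p. 0 \<le> f n \<and> f n \<le> 1" and fm: "v \<le> (\<Sum>n<p. f n) / real p"
      using f by (auto simp: family_def expect_def)
    obtain g where gb: "\<And>n. 0 \<le> g n \<and> g n \<le> 1" and gs: "(\<Sum>n<p. g n) = (\<Sum>n<p. f n)"
      and gl: "Lambda3 p g \<le> Lambda3 p f + \<epsilon> / 12" and glip: "\<And>n. \<bar>g ((n + 1) mod p) - g n\<bar> \<le> \<epsilon> / 12"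
      using P0[of p f] pp fb by blast
    define \<eta> where "\<eta> = min (\<epsilon> / 12) (1 / 2)"
    have \<eta>0: "0 < \<eta>" "\<eta> \<le> 1" "\<eta> \<le> \<epsilon> / 12" using \<epsilon> by (auto simp: \<eta>_def)
    define \<tau> where "\<tau> = min (\<eta> * (1 - v)) (\<epsilon> / 12)"
    have \<tau>0: "0 < \<tau>" "\<tau> \<le> \<eta> * (1 - v)" "\<tau> \<le> \<epsilon> / 12" using \<eta>0 v1 \<epsilon> by (auto simp: \<tau>_def)
    show "\<exists>Q. \<forall>q\<ge>Q. rho v q \<le> rho v p + \<epsilon>"
    proof (rule exI[of _ "nat \<lceil>real p / \<tau>\<rceil> + p + 1"], intro allI impI)
      fix q assume qQ: "nat \<lceil>real p / \<tau>\<rceil> + p + 1 \<le> q"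
      have qp: "q \<ge> p" and q0: "q > 0" using qQ by auto
      have "real p / \<tau> \<le> real q" using qQ by linarith
      hence tq: "real p / real q \<le> \<tau>" using \<tau>0 q0 by (simp add: field_simps)
      define t where "t = real p / real q"
      have t0: "0 \<le> t" "t \<le> \<tau>" using tq by (auto simp: t_def)
      define h where "h m = g (m * p div q)" for m
      have hb: "0 \<le> h m \<and> h m \<le> 1" for m using gb by (simp add: h_def)
      have lam0: "(0::real) \<le> \<epsilon> / 12" using \<epsilon> by simp
      have T1: "(\<Sum>m<q. h m) / real q \<ge> (\<Sum>n<p. g n) / real p - t"
        unfolding h_def t_def by (rule transfer(1)[where g=g, OF p0 qp gb lam0 glip])
      have T2: "Lambda3 q h \<le> Lambda3 p g + 3 * t + 3 * (\<epsilon> / 12)"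
        unfolding h_def[abs_def] t_def by (rule transfer(2)[where g=g, OF p0 qp gb lam0 glip])
      define h' where "h' m = (1 - \<eta>) * h m + \<eta>" for m
      have h'b: "0 \<le> h' m \<and> h' m \<le> 1" for m
      proof -
        have "0 \<le> (1 - \<eta>) * h m" using hb[of m] \<eta>0 by simp
        moreover have "(1 - \<eta>) * h m \<le> (1 - \<eta>) * 1" using hb[of m] \<eta>0 by (intro mult_left_mono) auto
        ultimately show ?thesis using \<eta>0 by (simp add: h'_def)
      qed
      have sh: "(\<Sum>m<q. h' m) = (1 - \<eta>) * (\<Sum>m<q. h m) + real q * \<eta>"
        unfolding h'_def by (simp add: sum.distrib sum_distrib_left)
      have "expect q h' = (1 - \<eta>) * ((\<Sum>m<q. h m) / real q) + \<eta>"
        using q0 unfolding expect_def sh by (simp add: field_simps)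
      moreover have "(1 - \<eta>) * ((\<Sum>m<q. h m) / real q) \<ge> (1 - \<eta>) * (v - t)"
      proof -
        have X: "v - t \<le> (\<Sum>m<q. h m) / real q" using T1 fm gs by simp
        show ?thesis using X \<eta>0 by (intro mult_left_mono) auto
      qed
      moreover have "(1 - \<eta>) * (v - t) + \<eta> \<ge> v"
      proof -
        have "(1 - \<eta>) * (v - t) + \<eta> - v = \<eta> * (1 - v) - (1 - \<eta>) * t" by (simp add: algebra_simps)
        moreover have "(1 - \<eta>) * t \<le> 1 * t" using \<eta>0 t0 by (intro mult_right_mono) auto
        ultimately show ?thesis using t0 \<tau>0 by linarith
      qed
      ultimately have "expect q h' \<ge> v" by linarith
      hence h'f: "h' \<in> family q v" using h'b by (simp add: family_def)
      have "rho v q \<le> Lambda3 q h'" by (rule rho_lower[OF q0 h'f])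
      also have "Lambda3 q h' \<le> Lambda3 q h + 3 * \<eta>"
        unfolding h'_def[abs_def] by (rule Lambda_mix[OF q0 hb]) (use \<eta>0 in auto)
      finally show "rho v q \<le> rho v p + \<epsilon>"
        using T2 gl fl \<eta>0 t0 \<tau>0 by linarith
    qed
  qed
qed

theorem theorem1:
  fixes v :: real
  assumes "0 < v" and "v \<le> 1"
  shows "\<exists>L. ((\<lambda>p. rho v p) \<longlongrightarrow> L) (inf sequentially (principal {p. prime p}))"
proof (cases "v = 1")
  case True
  have "eventually (\<lambda>p. rho v p = 1) (inf sequentially (principal {p. prime p}))"
    unfolding eventually_inf_principal
  proof (rule always_eventually, intro allI impI)
    fix p :: nat assume "p \<in> {p. prime p}"
    hence "p > 0" using prime_gt_0_nat by blast
    thus "rho v p = 1" using rho_v1 True by simp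
  qed
  thus ?thesis using tendsto_eventually by blast
next
  case False
  hence v0: "0 < v" and v1: "v < 1" using assms by auto
  define S where "S N = {p. prime p \<and> N \<le> p}" for N :: nat
  have Sne: "S N \<noteq> {}" for N using bigger_prime[of N] by (auto simp: S_def)
  have rb: "0 \<le> rho v p \<and> rho v p \<le> 1" if "prime p" for p
  proof -
    have "p > 0" using that prime_gt_0_nat by blast
    thus ?thesis using rho_nonneg rho_le1 assms(2) by blast
  qed
  define a where "a N = Inf (rho v ` S N)" for N
  have bb: "bdd_below (rho v ` S N)" for N
    by (rule bdd_belowI[of _ 0]) (auto simp: S_def dest: rb)
  have a_le: "a N \<le> rho v p" if "p \<in> S N" for N p
    unfolding a_def by (rule cInf_lower[OF _ bb]) (use that in simp)
  have a_le1: "a N \<le> 1" for N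
  proof -
    obtain p where "p \<in> S N" using Sne by blast
    thus ?thesis using a_le[of p N] rb[of p] by (auto simp: S_def)
  qed
  have ba: "bdd_above (range a)" by (rule bdd_aboveI[of _ 1]) (auto intro: a_le1)
  define L where "L = Sup (range a)"
  show ?thesis
  proof (rule exI[of _ L], rule tendsto_iff[THEN iffD2], intro allI impI)
    fix e :: real assume e: "e > 0"
    have "L - e < Sup (range a)" using e by (simp add: L_def)
    then obtain N1 where N1: "L - e < a N1" using less_cSUP_iff[of UNIV a "L - e"] ba by auto
    have e2: "e / 2 > 0" using e by simp
    obtain P0 where P0: "\<And>p. prime p \<and> p \<ge> P0 \<Longrightarrow> (\<exists>Q. \<forall>q\<ge>Q. rho v q \<le> rho v p + e / 2)"
      using KS[OF v0 v1 e2] by blast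
    have "a P0 \<le> L" unfolding L_def by (rule cSUP_upper[OF _ ba]) simp
    hence "Inf (rho v ` S P0) < L + e / 2" using e by (simp add: a_def)
    moreover have ne: "rho v ` S P0 \<noteq> {}" using Sne[of P0] by blast
    ultimately obtain y where "y \<in> rho v ` S P0" "y < L + e / 2" using cInf_lessD[OF ne] by blast
    then obtain p where p: "p \<in> S P0" "rho v p < L + e / 2" by auto
    obtain Q where Q: "\<And>q. q \<ge> Q \<Longrightarrow> rho v q \<le> rho v p + e / 2" using P0[of p] p(1) by (auto simp: S_def)
    show "eventually (\<lambda>x. dist (rho v x) L < e) (inf sequentially (principal {p. prime p}))"
      unfolding eventually_inf_principal eventually_sequentially
    proof (rule exI[of _ "max N1 Q"], intro allI impI)
      fix n assume n: "max N1 Q \<le> n" "n \<in> {p. prime p}"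
      have "n \<in> S N1" using n by (simp add: S_def)
      hence lo: "L - e < rho v n" using a_le[of n N1] N1 by linarith
      have hi: "rho v n < L + e" using Q[of n] n p(2) by simp
      show "dist (rho v n) L < e" using lo hi by (simp add: dist_real_def abs_less_iff)
    qed
  qed
qed


end
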